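(* Let $V\subseteq\mathbb R$, $(\Omega,\Psi(z)dz)$ a probability space, and for each $z$ let $f_\epsilon(t,\cdot,z)$ and $\tilde f(t,\cdot,z)$ be probability densities on $V$ at a fixed time $t$. Let $S_{\Delta w}\ge0$ be a bounded measurable smoothing kernel with mesh size $\Delta w>0$, and for $w\in V$ set $(S,g)(t,w,z):=\int_V S_{\Delta w}(w-v)g(t,v,z)\,dv$; assume $\mathrm{Var}[(S,\tilde f)(t,w,\cdot)]>0$ and $\mathrm{Var}[(S,f_\epsilon)(t,w,\cdot)]>0$ for every $w$. Let $z_1,\dots,z_M$ be i.i.d. with density $\Psi$ and, conditionally on them, for each $k$ let $w_1(t,z_k),\dots,w_N(t,z_k)$ be i.i.d. with law $f_\epsilon(t,\cdot,z_k)$, independent across $k$; let $f_{\epsilon,N,\Delta w}(t,w,z_k)=\frac1N\sum_{i=1}^NS_{\Delta w}(w-w_i(t,z_k))$. For each $w$ let $\lambda^*(w)=\mathrm{Cov}[(S,f_\epsilon),(S,\tilde f)]/\mathrm{Var}[(S,\tilde f)]$ and $$E^{\lambda^*}_M[f_{\epsilon,N,\Delta w}](t,w)=\frac1M\sum_{k=1}^Mf_{\epsilon,N,\Delta w}(t,w,z_k)-\lambda^*(w)\Big(\frac1M\sum_{k=1}^M(S,\tilde f)(t,w,z_k)-\mathbb E[(S,\tilde f)(t,w,\cdot)]\Big).$$ Assume that for some $1\le p\le\infty$, $q>0$ and constant $C_{\mathbb E[f]}$, $\|\mathbb E[f_\epsilon](t,\cdot)-\mathbb E[(S,f_\epsilon)](t,\cdot)\|_{L^p(V)}\le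 C_{\mathbb E[f]}(\Delta w)^q$. Then $$\big\|\mathbb E[f_\epsilon](t,\cdot)-E^{\lambda^*}_M[f_{\epsilon,N,\Delta w}](t,\cdot)\big\|_{L^p(V,L^2(\Omega,L^2(V)))}\le\frac{\Big\|\big(1-\rho^2_{(S,f_\epsilon),(S,\tilde f)}\big)^{1/2}\nu_{(S,f_\epsilon)}\Big\|_{L^p(V)}}{M^{1/2}}+\frac{\|\sigma_{S,M}\|_{L^p(V)}}{N^{1/2}}+C_{\mathbb E[f]}(\Delta w)^q.$$
   Context: $f_\epsilon$ is the solution of a Boltzmann-type kinetic model with uncertain parameter $z$ and $\tilde f$ the solution of its mean-field (Fokker–Planck) approximation, whose values are assumed computed exactly. Notation: $\mathbb E,\mathrm{Var},\mathrm{Cov}$ are with respect to $z\sim\Psi$ (over the i.i.d. parameter samples where applicable); $\mathbb E_V$ is expectation over the particle samples. For a random function $g(w)$, $\|g\|_{L^p(V,L^2(\Omega,L^2(V)))}:=\big\|\,\mathbb E[\mathbb E_V[g^2]]^{1/2}\big\|_{L^p(V)}$. For $w\in V$: $\nu^2_{(S,f_\epsilon)}(t,w)=\mathrm{Var}[(S,f_\epsilon)(t,w,\cdot)]$; $\rho_{(S,f_\epsilon),(S,\tilde f)}(t,w)$ is the Pearson correlation coefficient in $z$ between $(S,f_\epsilon)(t,w,\cdot)$ and $(S,\tilde f)(t,w,\cdot)$; $\sigma_S^2(t,w,z)=\int_V\big(S_{\Delta w}(w-v)-(S,f_\epsilon)(t,w,z)\big)^2f_\epsilon(t,v,z)\,dv$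 and $\sigma^2_{S,M}(t,w)=\mathbb E[\sigma_S^2(t,w,\cdot)]$. *)

theory Defs
  imports "HOL-Probability.Probability"
begin

definition enn_powr :: "ennreal \<Rightarrow> real \<Rightarrow> ennreal" where
  "enn_powr x r = (if x = \<top> then \<top> else ennreal (enn2real x powr r))"

definition Lp_norm :: "real set \<Rightarrow> ennreal \<Rightarrow> (real \<Rightarrow> ennreal) \<Rightarrow> ennreal" where
  "Lp_norm V p h =
     (if p = \<top> then esssup lborel (\<lambda>w. indicator V w * h w)
      else enn_powr (\<integral>\<^sup>+ w\<in>V. enn_powr (h w) (enn2real p) \<partial>lborel) (1 / enn2real p))"

definition Lp_norm_real :: "real set \<Rightarrow> ennreal \<Rightarrow> (real \<Rightarrow> real) \<Rightarrow> ennreal" where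
  "Lp_norm_real V p h = Lp_norm V p (\<lambda>w. ennreal \<bar>h w\<bar>)"

definition Ez :: "'z measure \<Rightarrow> ('z \<Rightarrow> real) \<Rightarrow> real" where
  "Ez P X = (\<integral>z. X z \<partial>P)"

definition Varz :: "'z measure \<Rightarrow> ('z \<Rightarrow> real) \<Rightarrow> real" where
  "Varz P X = Ez P (\<lambda>z. (X z - Ez P X)\<^sup>2)"

definition Covz :: "'z measure \<Rightarrow> ('z \<Rightarrow> real) \<Rightarrow> ('z \<Rightarrow> real) \<Rightarrow> real" where
  "Covz P X Y = Ez P (\<lambda>z. (X z - Ez P X) * (Y z - Ez P Y))"

definition Corrz :: "'z measure \<Rightarrow> ('z \<Rightarrow> real) \<Rightarrow> ('z \<Rightarrow> real) \<Rightarrow> real" where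
  "Corrz P X Y = Covz P X Y / (sqrt (Varz P X) * sqrt (Varz P Y))"

(* smoothing (S,g)(w,z) = \<integral>_V S(w-v) g(v,z) dv ; densities are written g z v *)
definition smooth :: "real set \<Rightarrow> (real \<Rightarrow> real) \<Rightarrow> ('z \<Rightarrow> real \<Rightarrow> real) \<Rightarrow> real \<Rightarrow> 'z \<Rightarrow> real" where
  "smooth V S g w z = (\<integral>v\<in>V. S (w - v) * g z v \<partial>lborel)"

definition sigmaS2 :: "real set \<Rightarrow> (real \<Rightarrow> real) \<Rightarrow> ('z \<Rightarrow> real \<Rightarrow> real) \<Rightarrow> real \<Rightarrow> 'z \<Rightarrow> real" where
  "sigmaS2 V S f w z = (\<integral>v\<in>V. (S (w - v) - smooth V S f w z)\<^sup>2 * f z v \<partial>lborel)"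

definition lambda_opt :: "'z measure \<Rightarrow> real set \<Rightarrow> (real \<Rightarrow> real) \<Rightarrow> ('z \<Rightarrow> real \<Rightarrow> real)
    \<Rightarrow> ('z \<Rightarrow> real \<Rightarrow> real) \<Rightarrow> real \<Rightarrow> real" where
  "lambda_opt P V S f ft w =
     Covz P (smooth V S f w) (smooth V S ft w) / Varz P (smooth V S ft w)"

definition kde :: "(real \<Rightarrow> real) \<Rightarrow> nat \<Rightarrow> (nat \<times> nat \<Rightarrow> real) \<Rightarrow> nat \<Rightarrow> real \<Rightarrow> real" where
  "kde S N ws k w = (\<Sum>i<N. S (w - ws (k, i))) / real N"

definition cv_estimator :: "'z measure \<Rightarrow> real set \<Rightarrow> (real \<Rightarrow> real) \<Rightarrow> ('z \<Rightarrow> real \<Rightarrow> real)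
    \<Rightarrow> ('z \<Rightarrow> real \<Rightarrow> real) \<Rightarrow> nat \<Rightarrow> nat \<Rightarrow> real \<Rightarrow> (nat \<Rightarrow> 'z) \<Rightarrow> (nat \<times> nat \<Rightarrow> real) \<Rightarrow> real" where
  "cv_estimator P V S f ft M N w zs ws =
     (\<Sum>k<M. kde S N ws k w) / real M
     - lambda_opt P V S f ft w *
         ((\<Sum>k<M. smooth V S ft w (zs k)) / real M - Ez P (smooth V S ft w))"

(* E[E_V[G]] for a real function G of the samples: z_1..z_M i.i.d. ~ P, and conditionally on
   them the particles ws(k,i), i<N, i.i.d. with density f(z_k, .) on V, independent across k *)
definition EEV :: "'z measure \<Rightarrow> real set \<Rightarrow> ('z \<Rightarrow> real \<Rightarrow> real) \<Rightarrow> nat \<Rightarrow> nat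
    \<Rightarrow> ((nat \<Rightarrow> 'z) \<Rightarrow> (nat \<times> nat \<Rightarrow> real) \<Rightarrow> real) \<Rightarrow> ennreal" where
  "EEV P V f M N G =
     (\<integral>\<^sup>+ zs. (\<integral>\<^sup>+ ws. ennreal (G zs ws) *
          (\<Prod>ki\<in>{..<M} \<times> {..<N}. ennreal (indicator V (ws ki) * f (zs (fst ki)) (ws ki)))
        \<partial>(PiM ({..<M} \<times> {..<N}) (\<lambda>_. lborel)))
      \<partial>(PiM {..<M} (\<lambda>_. P)))"

end

theory Submission
  imports Defs
begin


lemma set_integral_nonneg':
  fixes f :: "'a \<Rightarrow> real"
  assumes "\<And>x. x \<in> A \<Longrightarrow> 0 \<le> f x" shows "0 \<le> (\<integral>x\<in>A. f x \<partial>M)"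
  unfolding set_lebesgue_integral_def
  by (rule Bochner_Integration.integral_nonneg) (auto simp: assms split: split_indicator)

lemma sq_le_of_abs_le:
  fixes x K :: real assumes "\<bar>x\<bar> \<le> K" shows "x\<^sup>2 \<le> K\<^sup>2"
  using power_mono[OF assms abs_ge_zero, of 2] by simp

lemma comp2_meas:
  assumes fm: "case_prod f \<in> borel_measurable (borel \<Otimes>\<^sub>M borel)"
    and g: "g \<in> measurable N borel" and h: "h \<in> borel_measurable N"
  shows "(\<lambda>x. f (g x) (h x)) \<in> borel_measurable N"
  using measurable_compose[OF measurable_Pair[OF g h] fm] by simp

lemma smooth_meas:
  fixes f :: "'z::euclidean_space \<Rightarrow> real \<Rightarrow> real"
  assumes V: "V \<in> sets borel" and Sm: "S \<in> borel_measurable borel"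
    and fm: "case_prod f \<in> borel_measurable (borel \<Otimes>\<^sub>M borel)"
    and a: "a \<in> borel_measurable N" and b: "b \<in> measurable N borel"
  shows "(\<lambda>x. smooth V S f (a x) (b x)) \<in> borel_measurable N"
proof -
  note fc[measurable] = comp2_meas[OF fm]
  note [measurable] = a b Sm V
  have "(\<lambda>(x, v). indicator V v *\<^sub>R (S (a x - v) * f (b x) v)) \<in> borel_measurable (N \<Otimes>\<^sub>M borel)"
    by measurable
  then have m: "(\<lambda>(x, v). indicator V v *\<^sub>R (S (a x - v) * f (b x) v)) \<in> borel_measurable (N \<Otimes>\<^sub>M lborel)"
    by (simp add: measurable_cong_sets[OF sets_pair_measure_cong[OF refl sets_lborel] refl])
  show ?thesis
    unfolding smooth_def set_lebesgue_integral_def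
    by (rule lborel.borel_measurable_lebesgue_integral) (use m in simp)
qed

lemma sigma_meas:
  fixes f :: "'z::euclidean_space \<Rightarrow> real \<Rightarrow> real"
  assumes V: "V \<in> sets borel" and Sm: "S \<in> borel_measurable borel"
    and fm: "case_prod f \<in> borel_measurable (borel \<Otimes>\<^sub>M borel)"
    and a: "a \<in> borel_measurable N" and b: "b \<in> measurable N borel"
  shows "(\<lambda>x. sigmaS2 V S f (a x) (b x)) \<in> borel_measurable N"
proof -
  note fc[measurable] = comp2_meas[OF fm]
  note sc[measurable] = smooth_meas[OF V Sm fm]
  note [measurable] = a b Sm V
  have "(\<lambda>(x, v). indicator V v *\<^sub>R ((S (a x - v) - smooth V S f (a x) (b x))\<^sup>2 * f (b x) v)) \<in> borel_measurable (N \<Otimes>\<^sub>M borel)"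
    by measurable
  then have m: "(\<lambda>(x, v). indicator V v *\<^sub>R ((S (a x - v) - smooth V S f (a x) (b x))\<^sup>2 * f (b x) v)) \<in> borel_measurable (N \<Otimes>\<^sub>M lborel)"
    by (simp add: measurable_cong_sets[OF sets_pair_measure_cong[OF refl sets_lborel] refl])
  show ?thesis
    unfolding sigmaS2_def set_lebesgue_integral_def
    by (rule lborel.borel_measurable_lebesgue_integral) (use m in simp)
qed

lemma Ez_meas:
  assumes P: "prob_space P" and sP: "sets P = sets borel"
    and F: "case_prod F \<in> borel_measurable (N \<Otimes>\<^sub>M borel)"
  shows "(\<lambda>x. Ez P (F x)) \<in> borel_measurable N"
proof -
  interpret prob_space P by (fact P)
  have "case_prod F \<in> borel_measurable (N \<Otimes>\<^sub>M P)"
    using F by (simp add: measurable_cong_sets[OF sets_pair_measure_cong[OF refl sP] refl])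
  then show ?thesis unfolding Ez_def by (rule borel_measurable_lebesgue_integral)
qed



lemma prod_two_coords:
  fixes g h :: "'a \<Rightarrow> real"
  assumes "finite I" "i \<in> I" "j \<in> I" "i \<noteq> j"
  shows "(\<Prod>l\<in>I. (if l = i then g else if l = j then h else (\<lambda>_. 1)) (x l)) = g (x i) * h (x j)"
proof -
  have "I = insert i (insert j (I - {i, j}))" using assms by auto
  then have "(\<Prod>l\<in>I. (if l = i then g else if l = j then h else (\<lambda>_. 1)) (x l))
     = (\<Prod>l\<in>insert i (insert j (I - {i, j})). (if l = i then g else if l = j then h else (\<lambda>_. 1)) (x l))"
    by simp
  also have "\<dots> = g (x i) * h (x j)"
    using assms by (simp add: prod.insert_remove)
  finally show ?thesis .
qed

lemma prod_one_coord:
  assumes "finite I" "i \<in> I"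
  shows "(\<Prod>l\<in>I. (if l = i then g else (\<lambda>_. 1::real)) (x l)) = g (x i)"
proof -
  have "I = insert i (I - {i})" using assms by auto
  then have "(\<Prod>l\<in>I. (if l = i then g else (\<lambda>_. 1::real)) (x l))
     = (\<Prod>l\<in>insert i (I - {i}). (if l = i then g else (\<lambda>_. 1)) (x l))" by simp
  also have "\<dots> = g (x i)" using assms by (simp add: prod.insert_remove)
  finally show ?thesis .
qed

lemma PiM_integral_one:
  fixes Q :: "'i \<Rightarrow> 'a measure"
    and g :: "'a \<Rightarrow> real"
  assumes prob: "\<And>i. prob_space (Q i)" and fin: "finite I" and iI: "i \<in> I"
    and int: "integrable (Q i) g"
  shows "(\<integral>x. g (x i) \<partial>PiM I Q) = (\<integral>y. g y \<partial>Q i)"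
proof -
  interpret product_prob_space Q I
    by (simp add: product_prob_space_def product_prob_space_axioms_def prob
        product_sigma_finite_def prob_space_imp_sigma_finite)
  have "(\<integral>x. g (x i) \<partial>PiM I Q) = (\<integral>x. (\<Prod>l\<in>I. (if l = i then g else (\<lambda>_. 1::real)) (x l)) \<partial>PiM I Q)"
    using prod_one_coord[OF fin iI, of g] by simp
  also have "\<dots> = (\<Prod>l\<in>I. integral\<^sup>L (Q l) (if l = i then g else (\<lambda>_. 1::real)))"
    by (rule product_integral_prod[OF fin]) (auto simp: int)
  also have "\<dots> = (\<Prod>l\<in>I. (if l = i then integral\<^sup>L (Q i) g else 1))"
    by (intro prod.cong refl) (auto simp: prob_space.prob_space[OF prob])
  also have "\<dots> = integral\<^sup>L (Q i) g"
    using fin iI by (simp add: prod.If_cases)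
  finally show ?thesis .
qed

lemma PiM_integral_two:
  fixes Q :: "'i \<Rightarrow> 'a measure"
    and g h :: "'a \<Rightarrow> real"
  assumes prob: "\<And>i. prob_space (Q i)" and fin: "finite I" and iI: "i \<in> I" "j \<in> I" "i \<noteq> j"
    and int: "integrable (Q i) g" "integrable (Q j) h"
  shows "(\<integral>x. g (x i) * h (x j) \<partial>PiM I Q) = (\<integral>y. g y \<partial>Q i) * (\<integral>y. h y \<partial>Q j)"
proof -
  interpret product_prob_space Q I
    by (simp add: product_prob_space_def product_prob_space_axioms_def prob
        product_sigma_finite_def prob_space_imp_sigma_finite)
  have "(\<integral>x. g (x i) * h (x j) \<partial>PiM I Q) = (\<integral>x. (\<Prod>l\<in>I. (if l = i then g else if l = j then h else (\<lambda>_. 1::real)) (x l)) \<partial>PiM I Q)"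
    using prod_two_coords[OF fin iI, of g h] by simp
  also have "\<dots> = (\<Prod>l\<in>I. integral\<^sup>L (Q l) (if l = i then g else if l = j then h else (\<lambda>_. 1::real)))"
    by (rule product_integral_prod[OF fin]) (auto simp: int)
  also have "\<dots> = (\<Prod>l\<in>I. (if l = i then integral\<^sup>L (Q i) g else if l = j then integral\<^sup>L (Q j) h else 1))"
    by (intro prod.cong refl) (auto simp: prob_space.prob_space[OF prob])
  also have "\<dots> = (\<Prod>l\<in>I. (if l = i then (\<lambda>_. integral\<^sup>L (Q i) g) else if l = j then (\<lambda>_. integral\<^sup>L (Q j) h) else (\<lambda>_. 1::real)) (undefined::'a))"
    by (rule prod.cong) auto
  also have "\<dots> = integral\<^sup>L (Q i) g * integral\<^sup>L (Q j) h"
    using prod_two_coords[OF fin iI, of "\<lambda>_. integral\<^sup>L (Q i) g" "\<lambda>_. integral\<^sup>L (Q j) h" "\<lambda>_. undefined"]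
    by simp
  finally show ?thesis .
qed

lemma PiM_var_sum:
  fixes Q :: "'i \<Rightarrow> 'a measure" and h :: "'i \<Rightarrow> 'a \<Rightarrow> real"
  assumes prob: "\<And>i. prob_space (Q i)" and fin: "finite I"
    and meas: "\<And>i. i \<in> I \<Longrightarrow> h i \<in> borel_measurable (Q i)"
    and bnd: "\<And>i y. i \<in> I \<Longrightarrow> y \<in> space (Q i) \<Longrightarrow> \<bar>h i y\<bar> \<le> B"
    and zero: "\<And>i. i \<in> I \<Longrightarrow> (\<integral>y. h i y \<partial>Q i) = 0"
  shows "(\<integral>x. (c + (\<Sum>i\<in>I. h i (x i)))\<^sup>2 \<partial>PiM I Q) = c\<^sup>2 + (\<Sum>i\<in>I. \<integral>y. (h i y)\<^sup>2 \<partial>Q i)"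
proof -
  interpret product_prob_space Q I
    by (simp add: product_prob_space_def product_prob_space_axioms_def prob
        product_sigma_finite_def prob_space_imp_sigma_finite)
  interpret PP: finite_product_prob_space Q I
    by (simp add: finite_product_prob_space_def finite_product_sigma_finite_def
        finite_product_sigma_finite_axioms_def fin product_sigma_finite_axioms product_prob_space_axioms)
  have B0: "0 \<le> B" if "i \<in> I" for i
  proof -
    obtain y where "y \<in> space (Q i)" using prob_space.not_empty[OF prob] by blast
    then show ?thesis using bnd[OF that] by (meson abs_ge_zero order_trans)
  qed
  have int1: "integrable (Q i) (h i)" if "i \<in> I" for i
    by (rule finite_measure.integrable_const_bound[OF prob_space.axioms(1)[OF prob], where B=B])
       (use bnd that meas in auto)
  have int2: "integrable (Q i) (\<lambda>y. (h i y)\<^sup>2)" if "i \<in> I" for i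
  proof (rule finite_measure.integrable_const_bound[OF prob_space.axioms(1)[OF prob], where B="B*B"])
    show "AE x in Q i. norm ((h i x)\<^sup>2) \<le> B * B"
    proof (rule AE_I2)
      fix y assume "y \<in> space (Q i)"
      then have b: "\<bar>h i y\<bar> \<le> B" using bnd that by auto
      have "\<bar>h i y\<bar> * \<bar>h i y\<bar> \<le> B * B" by (rule mult_mono) (use b in auto)
      then show "norm ((h i y)\<^sup>2) \<le> B * B" by (simp add: power2_eq_square abs_mult)
    qed
  qed (use meas that in auto)
  have sp: "x i \<in> space (Q i)" if "x \<in> space (PiM I Q)" "i \<in> I" for x i
    using that by (auto simp: space_PiM)
  have mi: "(\<lambda>x. h i (x i)) \<in> borel_measurable (PiM I Q)" if "i \<in> I" for i
    using meas[OF that] that by measurable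
  have intP1: "integrable (PiM I Q) (\<lambda>x. h i (x i))" if "i \<in> I" for i
    by (rule P.integrable_const_bound[where B=B]) (use bnd sp that mi in auto)
  have intP2: "integrable (PiM I Q) (\<lambda>x. h i (x i) * h j (x j))" if "i \<in> I" "j \<in> I" for i j
  proof (rule P.integrable_const_bound[where B="B*B"])
    show "AE x in PiM I Q. norm (h i (x i) * h j (x j)) \<le> B * B"
      using bnd sp that by (auto simp: abs_mult intro!: mult_mono' AE_I2)
  qed (use mi that in auto)
  have cross: "(\<integral>x. h i (x i) * h j (x j) \<partial>PiM I Q) = (if i = j then \<integral>y. (h i y)\<^sup>2 \<partial>Q i else 0)"
    if "i \<in> I" "j \<in> I" for i j
  proof (cases "i = j")
    case True
    then show ?thesis
      using PiM_integral_one[where Q=Q and I=I and i=i and g="\<lambda>y. (h i y)\<^sup>2", OF prob fin that(1) int2[OF that(1)]]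
      by (simp add: power2_eq_square)
  next
    case False
    then show ?thesis
      using PiM_integral_two[where Q=Q and I=I and i=i and j=j, OF prob fin that False int1[OF that(1)] int1[OF that(2)]] zero that
      by simp
  qed
  have expand: "(c + (\<Sum>i\<in>I. h i (x i)))\<^sup>2 = c\<^sup>2 + (\<Sum>i\<in>I. 2 * c * h i (x i)) + (\<Sum>i\<in>I. \<Sum>j\<in>I. h i (x i) * h j (x j))" for x
    by (simp add: power2_eq_square algebra_simps sum_distrib_left sum_distrib_right sum_product)
  have "(\<integral>x. (c + (\<Sum>i\<in>I. h i (x i)))\<^sup>2 \<partial>PiM I Q)
      = (\<integral>x. c\<^sup>2 + (\<Sum>i\<in>I. 2 * c * h i (x i)) + (\<Sum>i\<in>I. \<Sum>j\<in>I. h i (x i) * h j (x j)) \<partial>PiM I Q)"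
    by (simp only: expand)
  also have "\<dots> = c\<^sup>2 + (\<Sum>i\<in>I. 2 * c * (\<integral>x. h i (x i) \<partial>PiM I Q)) + (\<Sum>i\<in>I. \<Sum>j\<in>I. \<integral>x. h i (x i) * h j (x j) \<partial>PiM I Q)"
    using intP1 intP2
    by (simp add: integral_add integral_sum Bochner_Integration.integrable_sum P.prob_space)
  also have "\<dots> = c\<^sup>2 + (\<Sum>i\<in>I. \<Sum>j\<in>I. if i = j then \<integral>y. (h i y)\<^sup>2 \<partial>Q i else 0)"
    using cross PiM_integral_one[where Q=Q and I=I, OF prob fin _ int1] zero by simp
  also have "\<dots> = c\<^sup>2 + (\<Sum>i\<in>I. \<integral>y. (h i y)\<^sup>2 \<partial>Q i)"
    using fin by (simp add: sum.delta)
  finally show ?thesis .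
qed

lemma indicator_PiE_prod:
  assumes "x \<in> extensional I" "finite I"
  shows "indicator (PiE I A) x = (\<Prod>i\<in>I. indicator (A i) (x i) :: ennreal)"
proof (cases "\<forall>i\<in>I. x i \<in> A i")
  case True
  then have "x \<in> PiE I A" using assms by (auto simp: PiE_def)
  then show ?thesis using True by simp
next
  case False
  then obtain i where "i \<in> I" "x i \<notin> A i" by blast
  then have "x \<notin> PiE I A" by auto
  then show ?thesis using \<open>i \<in> I\<close> \<open>x i \<notin> A i\<close> assms
    by (simp add: prod_zero_iff) (metis indicator_simps(2))
qed

lemma nn_integral_PiM_density:
  fixes M :: "'i \<Rightarrow> 'a measure" and d :: "'i \<Rightarrow> 'a \<Rightarrow> ennreal"
  assumes fin: "finite I" and sf: "\<And>i. sigma_finite_measure (M i)"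
    and dm: "\<And>i. d i \<in> borel_measurable (M i)"
    and sfd: "\<And>i. sigma_finite_measure (density (M i) (d i))"
    and Gm: "G \<in> borel_measurable (PiM I M)"
  shows "(\<integral>\<^sup>+x. G x * (\<Prod>i\<in>I. d i (x i)) \<partial>PiM I M) = (\<integral>\<^sup>+x. G x \<partial>PiM I (\<lambda>i. density (M i) (d i)))"
proof -
  interpret PM: product_sigma_finite M by (simp add: product_sigma_finite_def sf)
  interpret PD: product_sigma_finite "\<lambda>i. density (M i) (d i)" by (simp add: product_sigma_finite_def sfd)
  have Dm: "(\<lambda>x. \<Prod>i\<in>I. d i (x i)) \<in> borel_measurable (PiM I M)"
    using dm by measurable
  have setsD: "sets (PiM I (\<lambda>i. density (M i) (d i))) = sets (PiM I M)"
    by (rule sets_PiM_cong) auto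
  have eq: "density (PiM I M) (\<lambda>x. \<Prod>i\<in>I. d i (x i)) = PiM I (\<lambda>i. density (M i) (d i))"
  proof (rule PD.PiM_eqI[OF fin])
    show "sets (density (PiM I M) (\<lambda>x. \<Prod>i\<in>I. d i (x i))) = sets (PiM I (\<lambda>i. density (M i) (d i)))"
      using setsD by simp
  next
    fix A assume A: "\<And>i. i \<in> I \<Longrightarrow> A i \<in> sets (density (M i) (d i))"
    then have A': "\<And>i. i \<in> I \<Longrightarrow> A i \<in> sets (M i)" by simp
    have PA: "PiE I A \<in> sets (PiM I M)" using A' fin by (auto intro: sets_PiM_I_finite)
    have "emeasure (density (PiM I M) (\<lambda>x. \<Prod>i\<in>I. d i (x i))) (PiE I A)
        = (\<integral>\<^sup>+x. (\<Prod>i\<in>I. d i (x i)) * indicator (PiE I A) x \<partial>PiM I M)"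
      by (rule emeasure_density[OF Dm PA])
    also have "\<dots> = (\<integral>\<^sup>+x. (\<Prod>i\<in>I. d i (x i) * indicator (A i) (x i)) \<partial>PiM I M)"
      by (intro nn_integral_cong) (simp add: indicator_PiE_prod[OF _ fin] space_PiM PiE_iff prod.distrib)
    also have "\<dots> = (\<Prod>i\<in>I. \<integral>\<^sup>+y. d i y * indicator (A i) y \<partial>M i)"
      by (rule PM.product_nn_integral_prod[OF fin]) (use dm A' in measurable)
    also have "\<dots> = (\<Prod>i\<in>I. emeasure (density (M i) (d i)) (A i))"
      by (intro prod.cong refl emeasure_density[symmetric]) (use dm A' in auto)
    finally show "emeasure (density (PiM I M) (\<lambda>x. \<Prod>i\<in>I. d i (x i))) (PiE I A) = (\<Prod>i\<in>I. emeasure (density (M i) (d i)) (A i))" .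
  qed
  show ?thesis
    by (simp add: eq[symmetric] nn_integral_density[OF Dm Gm] mult.commute)
qed



lemma powr_split_ineq:
  fixes x y A B P :: real
  assumes x: "0 \<le> x" and y: "0 \<le> y" and A: "0 < A" and B: "0 < B" and P: "1 \<le> P"
  shows "(x + y) powr P \<le> (A + B) powr (P - 1) * (x powr P * A powr (1 - P) + y powr P * B powr (1 - P))"
proof -
  have AB: "0 < A + B" using A B by simp
  have key: "(A + B) powr P * (z / W) powr P * (W / (A + B)) = (A + B) powr (P - 1) * (z powr P * W powr (1 - P))"
    if "0 \<le> z" "0 < W" for z W
  proof -
    have "(A + B) powr P * (z / W) powr P * (W / (A + B)) = ((A + B) powr P / (A + B)) * (z powr P * (W / W powr P))"
      using that AB by (simp add: powr_divide field_simps)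
    also have "\<dots> = (A + B) powr (P - 1) * (z powr P * W powr (1 - P))"
      using that AB by (simp add: powr_diff powr_one_gt_zero_iff)
    finally show ?thesis .
  qed
  show ?thesis
  proof (cases "x = 0 \<or> y = 0")
    case True
    then show ?thesis
    proof
      assume x0: "x = 0"
      have "y powr P = (B + 0) powr (P - 1) * (y powr P * B powr (1 - P))"
        using B by (simp add: powr_add[symmetric])
      also have "\<dots> \<le> (A + B) powr (P - 1) * (y powr P * B powr (1 - P))"
        using A B P by (intro mult_right_mono powr_mono2) auto
      finally show ?thesis using x0 P by simp
    next
      assume y0: "y = 0"
      have "x powr P = (A + 0) powr (P - 1) * (x powr P * A powr (1 - P))"
        using A by (simp add: powr_add[symmetric])
      also have "\<dots> \<le> (A + B) powr (P - 1) * (x powr P * A powr (1 - P))"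
        using A B P by (intro mult_right_mono powr_mono2) auto
      finally show ?thesis using y0 P by simp
    qed
  next
    case False
    then have xp: "0 < x" and yp: "0 < y" using x y by auto
    define t where "t = A / (A + B)"
    have t: "0 \<le> t" "t \<le> 1" using A B by (auto simp: t_def)
    have t1: "1 - t = B / (A + B)" using A B by (simp add: t_def field_simps)
    have "((x + y) / (A + B)) = t * (x / A) + (1 - t) * (y / B)"
      unfolding t1 using A B by (simp add: t_def add_divide_distrib)
    then have "((x + y) / (A + B)) powr P \<le> t * (x / A) powr P + (1 - t) * (y / B) powr P"
      using convex_onD[OF powr_convex[OF P] t(1) t(2), of "y / B" "x / A"] xp yp A B by (simp add: algebra_simps)
    then have "(A + B) powr P * ((x + y) / (A + B)) powr P \<le> (A + B) powr P * (t * (x / A) powr P + (1 - t) * (y / B) powr P)"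
      by (intro mult_left_mono) auto
    also have "(A + B) powr P * ((x + y) / (A + B)) powr P = (x + y) powr P"
      using AB xp yp by (simp add: powr_divide)
    also have "(A + B) powr P * (t * (x / A) powr P + (1 - t) * (y / B) powr P)
        = (A + B) powr P * (x / A) powr P * (A / (A + B)) + (A + B) powr P * (y / B) powr P * (B / (A + B))"
      using AB unfolding t1 by (simp add: t_def algebra_simps)
    also have "\<dots> = (A + B) powr (P - 1) * (x powr P * A powr (1 - P) + y powr P * B powr (1 - P))"
      using key[OF x A] key[OF y B] by (simp add: algebra_simps)
    finally show ?thesis .
  qed
qed

lemma enn_powr_ennreal: "0 \<le> x \<Longrightarrow> enn_powr (ennreal x) r = ennreal (x powr r)"
  by (simp add: enn_powr_def)

lemma enn_powr_top[simp]: "enn_powr \<top> r = \<top>"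
  by (simp add: enn_powr_def)

lemma enn_powr_mono:
  assumes "0 \<le> r" "x \<le> y" shows "enn_powr x r \<le> enn_powr y r"
proof (cases "y = \<top>")
  case True then show ?thesis by simp
next
  case False
  then have "x \<noteq> \<top>" using assms top_unique by auto
  then show ?thesis using False assms
    by (auto simp: enn_powr_def intro!: ennreal_leI powr_mono2 enn2real_mono simp: less_top)
qed

lemma minkowski_nn:
  fixes r1 r2 :: "'a \<Rightarrow> real" and P :: real
  assumes P: "1 \<le> P"
    and m1: "r1 \<in> borel_measurable M" and m2: "r2 \<in> borel_measurable M"
    and n1: "\<And>x. 0 \<le> r1 x" and n2: "\<And>x. 0 \<le> r2 x"
  shows "enn_powr (\<integral>\<^sup>+x. ennreal ((r1 x + r2 x) powr P) \<partial>M) (1/P)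
         \<le> enn_powr (\<integral>\<^sup>+x. ennreal (r1 x powr P) \<partial>M) (1/P) + enn_powr (\<integral>\<^sup>+x. ennreal (r2 x powr P) \<partial>M) (1/P)"
    (is "enn_powr ?I (1/P) \<le> enn_powr ?I1 (1/P) + enn_powr ?I2 (1/P)")
proof -
  have P0: "0 < P" using P by simp
  show ?thesis
  proof (cases "?I1 = \<top> \<or> ?I2 = \<top>")
    case True then show ?thesis by auto
  next
    case False
    define a where "a = enn2real ?I1"
    define b where "b = enn2real ?I2"
    have a: "?I1 = ennreal a" "0 \<le> a" using False by (auto simp: a_def less_top)
    have b: "?I2 = ennreal b" "0 \<le> b" using False by (auto simp: b_def less_top)
    show ?thesis
    proof (cases "a = 0 \<or> b = 0")
      case True
      then show ?thesis
      proof
        assume a0: "a = 0"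
        then have "AE x in M. ennreal (r1 x powr P) = 0"
          using a by (subst nn_integral_0_iff_AE[symmetric]) (use m1 in auto)
        then have "AE x in M. r1 x = 0"
          by eventually_elim (use n1 in auto)
        then have "?I = ?I2"
          by (intro nn_integral_cong_AE) (auto elim: eventually_mono)
        moreover have "enn_powr ?I1 (1/P) = 0" using a a0 P0 by (simp add: enn_powr_def)
        ultimately show ?thesis by simp
      next
        assume b0: "b = 0"
        then have "AE x in M. ennreal (r2 x powr P) = 0"
          using b by (subst nn_integral_0_iff_AE[symmetric]) (use m2 in auto)
        then have "AE x in M. r2 x = 0"
          by eventually_elim (use n2 in auto)
        then have "?I = ?I1"
          by (intro nn_integral_cong_AE) (auto elim: eventually_mono)
        moreover have "enn_powr ?I2 (1/P) = 0" using b b0 P0 by (simp add: enn_powr_def)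
        ultimately show ?thesis by simp
      qed
    next
      case False
      then have ap: "0 < a" and bp: "0 < b" using a b by auto
      define A where "A = a powr (1/P)"
      define B where "B = b powr (1/P)"
      have Ap: "0 < A" and Bp: "0 < B" using ap bp by (auto simp: A_def B_def)
      have AP: "A powr P = a" using ap P0 by (simp add: A_def powr_powr)
      have BP: "B powr P = b" using bp P0 by (simp add: B_def powr_powr)
      define K1 where "K1 = (A + B) powr (P - 1) * A powr (1 - P)"
      define K2 where "K2 = (A + B) powr (P - 1) * B powr (1 - P)"
      have K: "0 \<le> K1" "0 \<le> K2" by (auto simp: K1_def K2_def)
      have "?I \<le> (\<integral>\<^sup>+x. ennreal K1 * ennreal (r1 x powr P) + ennreal K2 * ennreal (r2 x powr P) \<partial>M)"
      proof (intro nn_integral_mono)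
        fix x
        have "(r1 x + r2 x) powr P \<le> K1 * r1 x powr P + K2 * r2 x powr P"
          using powr_split_ineq[OF n1 n2 Ap Bp P, of x x] by (simp add: K1_def K2_def algebra_simps)
        then show "ennreal ((r1 x + r2 x) powr P) \<le> ennreal K1 * ennreal (r1 x powr P) + ennreal K2 * ennreal (r2 x powr P)"
          using K by (simp add: ennreal_mult'[symmetric] ennreal_plus[symmetric] del: ennreal_plus)
      qed
      also have "\<dots> = ennreal K1 * ?I1 + ennreal K2 * ?I2"
        using m1 m2 by (simp add: nn_integral_add nn_integral_cmult)
      also have "\<dots> = ennreal (K1 * a + K2 * b)"
        using a b K by (simp add: ennreal_mult'[symmetric] ennreal_plus[symmetric] del: ennreal_plus)
      also have "K1 * a + K2 * b = (A + B) powr P"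
      proof -
        have "A powr (1 - P) * a = A" using AP Ap by (simp add: AP[symmetric] powr_add[symmetric])
        moreover have "B powr (1 - P) * b = B" using BP Bp by (simp add: BP[symmetric] powr_add[symmetric])
        ultimately have "K1 * a + K2 * b = (A + B) powr (P - 1) * (A + B)"
          unfolding K1_def K2_def by (metis (no_types, lifting) distrib_left mult.assoc mult.commute)
        also have "\<dots> = (A + B) powr P" using Ap Bp powr_add[of "A+B" "P-1" 1] by simp
        finally show ?thesis .
      qed
      finally have le: "?I \<le> ennreal ((A + B) powr P)" .
      have "enn_powr ?I (1/P) \<le> enn_powr (ennreal ((A + B) powr P)) (1/P)"
        by (rule enn_powr_mono[OF _ le]) (use P0 in simp)
      also have "\<dots> = ennreal (A + B)"
        using Ap Bp P0 by (simp add: enn_powr_ennreal powr_powr)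
      also have "\<dots> = enn_powr ?I1 (1/P) + enn_powr ?I2 (1/P)"
        using a b Ap Bp by (simp add: enn_powr_ennreal A_def B_def ennreal_plus)
      finally show ?thesis .
    qed
  qed
qed

lemma div_ennreal_eq: "0 < c \<Longrightarrow> x / ennreal c = x * ennreal (1 / c)"
  by (metis divide_ennreal ennreal_1 ennreal_times_divide mult.right_neutral zero_le_one)

lemma meas_density_borel:
  assumes "f \<in> borel_measurable borel" shows "f \<in> borel_measurable (density lborel g)"
  using assms by (simp add: measurable_cong_sets[OF sets_density[of lborel g] refl])

lemma set_nn_density:
  assumes V: "V \<in> sets lborel" and F: "F \<in> borel_measurable borel"
  shows "(\<integral>\<^sup>+w\<in>V. F w \<partial>lborel) = (\<integral>\<^sup>+w. F w \<partial>density lborel (indicator V))"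
  using V F by (subst nn_integral_density) (auto simp: mult.commute)

lemma Lp_real_fin:
  assumes "p \<noteq> \<top>"
  shows "Lp_norm V p (\<lambda>w. ennreal (r w)) =
     enn_powr (\<integral>\<^sup>+w\<in>V. ennreal (max 0 (r w) powr enn2real p) \<partial>lborel) (1 / enn2real p)"
proof -
  have *: "enn_powr (ennreal (r x)) P = ennreal (max 0 (r x) powr P)" for x P
    by (cases "0 \<le> r x") (auto simp: enn_powr_def ennreal_neg)
  show ?thesis using assms by (simp add: Lp_norm_def *)
qed

lemma Lp_scale_fin:
  fixes P :: real
  assumes V: "V \<in> sets lborel" and P: "1 \<le> P" and c: "0 < c" and g: "g \<in> borel_measurable borel"
    and gn: "\<And>w. 0 \<le> g w"
  shows "enn_powr (\<integral>\<^sup>+w\<in>V. ennreal ((g w / c) powr P) \<partial>lborel) (1 / P)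
       = enn_powr (\<integral>\<^sup>+w\<in>V. ennreal (g w powr P) \<partial>lborel) (1 / P) / ennreal c"
proof -
  define I where "I = (\<integral>\<^sup>+w\<in>V. ennreal (g w powr P) \<partial>lborel)"
  have "(\<integral>\<^sup>+w\<in>V. ennreal ((g w / c) powr P) \<partial>lborel) = (\<integral>\<^sup>+w. ennreal (1 / c powr P) * (ennreal (g w powr P) * indicator V w) \<partial>lborel)"
  proof (intro nn_integral_cong)
    fix x
    have "ennreal (g x powr P / c powr P) = ennreal (1 / c powr P) * ennreal (g x powr P)"
      using c by (simp add: ennreal_mult'[symmetric])
    then show "ennreal ((g x / c) powr P) * indicator V x = ennreal (1 / c powr P) * (ennreal (g x powr P) * indicator V x)"
      using c gn by (simp add: powr_divide mult.assoc)
  qed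
  also have "\<dots> = ennreal (1 / c powr P) * I"
  proof -
    have V': "V \<in> sets borel" using V by simp
    have "(\<lambda>w. ennreal (g w powr P) * indicator V w) \<in> borel_measurable borel"
      using V' g by measurable
    then show ?thesis unfolding I_def by (intro nn_integral_cmult) (simp add: measurable_lborel1)
  qed
  finally have eq: "(\<integral>\<^sup>+w\<in>V. ennreal ((g w / c) powr P) \<partial>lborel) = ennreal (1 / c powr P) * I" .
  show ?thesis
  proof (cases "I = \<top>")
    case True
    then show ?thesis using eq c unfolding I_def[symmetric] by (simp add: div_ennreal_eq ennreal_mult_top)
  next
    case False
    then obtain i where i: "I = ennreal i" "0 \<le> i" by (cases I) auto
    have "enn_powr (ennreal (1 / c powr P) * ennreal i) (1/P) = ennreal ((1 / c powr P * i) powr (1/P))"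
      using c i by (simp add: ennreal_mult'[symmetric] enn_powr_ennreal)
    also have "(1 / c powr P * i) powr (1/P) = i powr (1/P) * (1 / c)"
      using c i P by (simp add: powr_mult powr_divide powr_powr)
    also have "ennreal (i powr (1/P) * (1 / c)) = enn_powr I (1/P) / ennreal c"
      using c i by (simp add: enn_powr_ennreal div_ennreal_eq ennreal_mult'[symmetric])
    finally show ?thesis using eq i unfolding I_def by simp
  qed
qed

lemma Lp_final:
  fixes L a g1 g2 :: "real \<Rightarrow> real" and c1 c2 :: real
  assumes V: "V \<in> sets lborel" and p: "1 \<le> p"
    and mL: "L \<in> borel_measurable borel" and ma: "a \<in> borel_measurable borel"
    and m1: "g1 \<in> borel_measurable borel" and m2: "g2 \<in> borel_measurable borel"
    and c1: "0 < c1" and c2: "0 < c2" and Ln: "\<And>w. 0 \<le> L w"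
    and bound: "\<And>w. w \<in> V \<Longrightarrow> L w \<le> \<bar>a w\<bar> + \<bar>g1 w\<bar> / c1 + \<bar>g2 w\<bar> / c2"
  shows "Lp_norm V p (\<lambda>w. ennreal (L w)) \<le> Lp_norm_real V p a + Lp_norm_real V p g1 / ennreal c1 + Lp_norm_real V p g2 / ennreal c2"
proof (cases "p = \<top>")
  case True
  define E0 where "E0 = esssup lborel (\<lambda>w. indicator V w * ennreal \<bar>a w\<bar>)"
  define E1 where "E1 = esssup lborel (\<lambda>w. indicator V w * ennreal \<bar>g1 w\<bar>)"
  define E2 where "E2 = esssup lborel (\<lambda>w. indicator V w * ennreal \<bar>g2 w\<bar>)"
  have V': "V \<in> sets borel" using V by simp
  have mLL: "(\<lambda>w. indicator V w * ennreal (L w)) \<in> borel_measurable lborel"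
    using V' mL by (simp add: measurable_lborel1)
  have "AE w in lborel. indicator V w * ennreal (L w) \<le> E0 + E1 / ennreal c1 + E2 / ennreal c2"
    using esssup_AE[of "\<lambda>w. indicator V w * ennreal \<bar>a w\<bar>" lborel]
      esssup_AE[of "\<lambda>w. indicator V w * ennreal \<bar>g1 w\<bar>" lborel]
      esssup_AE[of "\<lambda>w. indicator V w * ennreal \<bar>g2 w\<bar>" lborel]
  proof eventually_elim
    case (elim w)
    show ?case
    proof (cases "w \<in> V")
      case False then show ?thesis by simp
    next
      case True
      have "ennreal (L w) \<le> ennreal (\<bar>a w\<bar> + \<bar>g1 w\<bar> / c1 + \<bar>g2 w\<bar> / c2)"
        using bound[OF True] by (rule ennreal_leI)
      also have "\<dots> = ennreal \<bar>a w\<bar> + ennreal \<bar>g1 w\<bar> / ennreal c1 + ennreal \<bar>g2 w\<bar> / ennreal c2"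
        using c1 c2 by (simp add: ennreal_plus divide_ennreal)
      also have "\<dots> \<le> E0 + E1 / ennreal c1 + E2 / ennreal c2"
        using elim True unfolding E0_def E1_def E2_def
        by (intro add_mono divide_right_mono_ennreal) auto
      finally show ?thesis using True by simp
    qed
  qed
  then have "esssup lborel (\<lambda>w. indicator V w * ennreal (L w)) \<le> E0 + E1 / ennreal c1 + E2 / ennreal c2"
    by (rule esssup_I[OF mLL])
  then show ?thesis using True
    by (simp add: Lp_norm_def Lp_norm_real_def E0_def E1_def E2_def)
next
  case False
  define P where "P = enn2real p"
  have pP: "p = ennreal P" using False by (cases p) (auto simp: P_def)
  have P1: "1 \<le> P" proof - have "ennreal 1 \<le> ennreal P" using p pP by simp then show ?thesis by (simp add: P_def ennreal_le_iff) qed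
  have P0: "0 < P" using P1 by simp
  have V': "V \<in> sets borel" using V by simp
  define D where "D = density lborel (indicator V :: real \<Rightarrow> ennreal)"
  define R where "R w = \<bar>a w\<bar> + \<bar>g1 w\<bar> / c1 + \<bar>g2 w\<bar> / c2" for w
  define J where "J r = enn_powr (\<integral>\<^sup>+w\<in>V. ennreal (r w powr P) \<partial>lborel) (1 / P)" for r :: "real \<Rightarrow> real"
  have JD: "J r = enn_powr (\<integral>\<^sup>+w. ennreal (r w powr P) \<partial>D) (1 / P)" if "r \<in> borel_measurable borel" for r
    unfolding J_def D_def using that by (subst set_nn_density[OF V]) (measurable, simp_all)
  have Lr: "Lp_norm_real V p r = J (\<lambda>w. \<bar>r w\<bar>)" for r
    unfolding Lp_norm_real_def J_def using False by (simp add: Lp_real_fin P_def)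
  have "Lp_norm V p (\<lambda>w. ennreal (L w)) = J L"
    unfolding J_def using False Ln by (simp add: Lp_real_fin P_def)
  also have "\<dots> \<le> J R"
    unfolding J_def
  proof (intro enn_powr_mono nn_integral_mono)
    fix w
    show "ennreal (L w powr P) * indicator V w \<le> ennreal (R w powr P) * indicator V w"
      using bound[of w] Ln[of w] P0 by (cases "w \<in> V") (auto simp: R_def intro!: ennreal_leI powr_mono2)
  qed (use P0 in simp)
  also have "\<dots> \<le> J (\<lambda>w. \<bar>a w\<bar> + \<bar>g1 w\<bar> / c1) + J (\<lambda>w. \<bar>g2 w\<bar> / c2)"
  proof -
    have "J R = enn_powr (\<integral>\<^sup>+w. ennreal (((\<bar>a w\<bar> + \<bar>g1 w\<bar> / c1) + \<bar>g2 w\<bar> / c2) powr P) \<partial>D) (1 / P)"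
    proof -
      have mR: "R \<in> borel_measurable borel" unfolding R_def using ma m1 m2 by measurable
      show ?thesis by (subst JD[OF mR]) (simp add: R_def)
    qed
    also have "\<dots> \<le> J (\<lambda>w. \<bar>a w\<bar> + \<bar>g1 w\<bar> / c1) + J (\<lambda>w. \<bar>g2 w\<bar> / c2)"
    proof -
      have e1: "J (\<lambda>w. \<bar>a w\<bar> + \<bar>g1 w\<bar> / c1) = enn_powr (\<integral>\<^sup>+w. ennreal ((\<bar>a w\<bar> + \<bar>g1 w\<bar> / c1) powr P) \<partial>D) (1 / P)"
        by (rule JD) (use ma m1 in measurable)
      have e2: "J (\<lambda>w. \<bar>g2 w\<bar> / c2) = enn_powr (\<integral>\<^sup>+w. ennreal ((\<bar>g2 w\<bar> / c2) powr P) \<partial>D) (1 / P)"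
        by (rule JD) (use m2 in measurable)
      show ?thesis unfolding e1 e2 using ma m1 m2 c1 c2 unfolding D_def
        by (intro minkowski_nn[OF P1] meas_density_borel) auto
    qed
    finally show ?thesis .
  qed
  also have "J (\<lambda>w. \<bar>a w\<bar> + \<bar>g1 w\<bar> / c1) \<le> J (\<lambda>w. \<bar>a w\<bar>) + J (\<lambda>w. \<bar>g1 w\<bar> / c1)"
    proof -
      have e1: "J (\<lambda>w. \<bar>a w\<bar> + \<bar>g1 w\<bar> / c1) = enn_powr (\<integral>\<^sup>+w. ennreal ((\<bar>a w\<bar> + \<bar>g1 w\<bar> / c1) powr P) \<partial>D) (1 / P)"
        by (rule JD) (use ma m1 in measurable)
      have e2: "J (\<lambda>w. \<bar>a w\<bar>) = enn_powr (\<integral>\<^sup>+w. ennreal (\<bar>a w\<bar> powr P) \<partial>D) (1 / P)"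
        by (rule JD) (use ma in measurable)
      have e3: "J (\<lambda>w. \<bar>g1 w\<bar> / c1) = enn_powr (\<integral>\<^sup>+w. ennreal ((\<bar>g1 w\<bar> / c1) powr P) \<partial>D) (1 / P)"
        by (rule JD) (use m1 in measurable)
      show ?thesis unfolding e1 e2 e3 using ma m1 c1 unfolding D_def
        by (intro minkowski_nn[OF P1] meas_density_borel) auto
    qed
  also have "J (\<lambda>w. \<bar>g1 w\<bar> / c1) = J (\<lambda>w. \<bar>g1 w\<bar>) / ennreal c1"
    unfolding J_def using Lp_scale_fin[OF V P1 c1, of "\<lambda>w. \<bar>g1 w\<bar>"] m1 by simp
  also have "J (\<lambda>w. \<bar>g2 w\<bar> / c2) = J (\<lambda>w. \<bar>g2 w\<bar>) / ennreal c2"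
    unfolding J_def using Lp_scale_fin[OF V P1 c2, of "\<lambda>w. \<bar>g2 w\<bar>"] m2 by simp
  finally show ?thesis by (simp add: Lr add_mono)
qed



lemma smooth_bounds:
  fixes f :: "'z \<Rightarrow> real \<Rightarrow> real"
  assumes V: "V \<in> sets borel" and fm: "f z \<in> borel_measurable borel"
    and fn: "\<And>v. v \<in> V \<Longrightarrow> 0 \<le> f z v"
    and fd: "set_integrable lborel V (f z) \<and> (\<integral>v\<in>V. f z v \<partial>lborel) = 1"
    and Sm: "S \<in> borel_measurable borel" and Sn: "\<And>x. 0 \<le> S x" and SB: "\<And>x. S x \<le> B"
  shows "0 \<le> smooth V S f w z" "smooth V S f w z \<le> B"
    "0 \<le> sigmaS2 V S f w z" "sigmaS2 V S f w z \<le> B\<^sup>2"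
proof -
  have V': "V \<in> sets lborel" using V by simp
  have fi: "integrable lborel (\<lambda>v. indicator V v * f z v)" using fd by (simp add: set_integrable_def)
  have int_bdd: "set_integrable lborel V (\<lambda>v. g v * f z v)"
    if gm: "g \<in> borel_measurable borel" and gB: "\<And>v. \<bar>g v\<bar> \<le> K" for g K
  proof -
    have "integrable lborel (\<lambda>v. indicator V v *\<^sub>R (g v * f z v))"
    proof (rule Bochner_Integration.integrable_bound[OF integrable_mult_right[OF fi, of K]])
      show "(\<lambda>v. indicator V v *\<^sub>R (g v * f z v)) \<in> borel_measurable lborel"
        using gm fm V by (simp add: measurable_lborel1)
      show "AE v in lborel. norm (indicator V v *\<^sub>R (g v * f z v)) \<le> norm (K * (indicator V v * f z v))"
      proof (rule AE_I2)
        fix v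
        show "norm (indicator V v *\<^sub>R (g v * f z v)) \<le> norm (K * (indicator V v * f z v))"
        proof (cases "v \<in> V")
          case True
          have "\<bar>g v\<bar> * \<bar>f z v\<bar> \<le> K * \<bar>f z v\<bar>" by (rule mult_right_mono[OF gB]) simp
          moreover have "0 \<le> K" using gB[of v] by linarith
          ultimately show ?thesis using True by (simp add: abs_mult)
        qed simp
      qed
    qed
    then show ?thesis by (simp add: set_integrable_def)
  qed
  have Swm: "(\<lambda>v. S (w - v)) \<in> borel_measurable borel" using Sm by measurable
  have SwB: "\<bar>S (w - v)\<bar> \<le> B" for v using Sn[of "w-v"] SB[of "w-v"] by simp
  have i1: "set_integrable lborel V (\<lambda>v. S (w - v) * f z v)" by (rule int_bdd[OF Swm SwB])
  show s0: "0 \<le> smooth V S f w z"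
    unfolding smooth_def by (rule set_integral_nonneg') (use Sn fn in auto)
  have "smooth V S f w z \<le> (\<integral>v\<in>V. B * f z v \<partial>lborel)"
    unfolding smooth_def
    by (rule set_integral_mono[OF i1]) (use fd fn SB in \<open>auto intro: set_integrable_mult_right mult_right_mono\<close>)
  also have "\<dots> = B" using fd by (simp add: set_integral_mult_right)
  finally show sB: "smooth V S f w z \<le> B" .
  define s where "s = smooth V S f w z"
  have dB: "\<bar>S (w - v) - s\<bar> \<le> B" for v using s0 sB Sn[of "w-v"] SB[of "w-v"] by (simp add: s_def abs_le_iff)
  have d2m: "(\<lambda>v. (S (w - v) - s)\<^sup>2) \<in> borel_measurable borel" using Sm by measurable
  have d2B: "\<bar>(S (w - v) - s)\<^sup>2\<bar> \<le> B\<^sup>2" for v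
    using power_mono[OF dB[of v] abs_ge_zero, of 2] by simp
  have i2: "set_integrable lborel V (\<lambda>v. (S (w - v) - s)\<^sup>2 * f z v)" by (rule int_bdd[OF d2m d2B])
  show "0 \<le> sigmaS2 V S f w z"
    unfolding sigmaS2_def by (rule set_integral_nonneg') (use fn in auto)
  have "sigmaS2 V S f w z \<le> (\<integral>v\<in>V. B\<^sup>2 * f z v \<partial>lborel)"
    unfolding sigmaS2_def s_def[symmetric]
    by (rule set_integral_mono[OF i2]) (use fd fn d2B in \<open>auto intro: set_integrable_mult_right mult_right_mono\<close>)
  also have "\<dots> = B\<^sup>2" using fd by (simp add: set_integral_mult_right)
  finally show "sigmaS2 V S f w z \<le> B\<^sup>2" .
qed

lemma var_identity:
  fixes X Y :: "'z \<Rightarrow> real"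
  assumes P: "prob_space P" and Xm: "X \<in> borel_measurable P" and Ym: "Y \<in> borel_measurable P"
    and XB: "\<And>z. \<bar>X z\<bar> \<le> K" and YB: "\<And>z. \<bar>Y z\<bar> \<le> K"
    and VY: "Varz P Y > 0" and VX: "Varz P X > 0"
  shows "Varz P (\<lambda>z. X z - (Covz P X Y / Varz P Y) * Y z) = (1 - (Corrz P X Y)\<^sup>2) * Varz P X"
proof -
  interpret prob_space P by (fact P)
  define mx where "mx = Ez P X"
  define my where "my = Ez P Y"
  define C where "C = Covz P X Y"
  define vx where "vx = Varz P X"
  define vy where "vy = Varz P Y"
  define lam where "lam = C / vy"
  have K0: "0 \<le> K" using XB[of undefined] by linarith
  have iX: "integrable P X" by (rule integrable_const_bound[where B=K]) (use XB Xm in auto)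
  have iY: "integrable P Y" by (rule integrable_const_bound[where B=K]) (use YB Ym in auto)
  have bnd: "\<bar>X z - mx\<bar> \<le> K + \<bar>mx\<bar>" "\<bar>Y z - my\<bar> \<le> K + \<bar>my\<bar>" for z
    using XB[of z] YB[of z] by linarith+
  have iXX: "integrable P (\<lambda>z. (X z - mx)\<^sup>2)"
    by (rule integrable_const_bound[where B="(K + \<bar>mx\<bar>)\<^sup>2"]) (use bnd Xm in \<open>auto intro!: sq_le_of_abs_le\<close>)
  have iYY: "integrable P (\<lambda>z. (Y z - my)\<^sup>2)"
    by (rule integrable_const_bound[where B="(K + \<bar>my\<bar>)\<^sup>2"]) (use bnd Ym in \<open>auto intro!: sq_le_of_abs_le\<close>)
  have iXY: "integrable P (\<lambda>z. (X z - mx) * (Y z - my))"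
  proof (rule integrable_const_bound[where B="(K + \<bar>mx\<bar>) * (K + \<bar>my\<bar>)"])
    show "AE z in P. norm ((X z - mx) * (Y z - my)) \<le> (K + \<bar>mx\<bar>) * (K + \<bar>my\<bar>)"
      using bnd K0 by (intro AE_I2) (auto simp: abs_mult intro!: mult_mono)
  qed (use Xm Ym in measurable)
  have E1: "Ez P (\<lambda>z. X z - lam * Y z) = mx - lam * my"
    unfolding Ez_def mx_def my_def using iX iY by simp
  have "Varz P (\<lambda>z. X z - lam * Y z) = (\<integral>z. (X z - mx)\<^sup>2 - 2 * lam * ((X z - mx) * (Y z - my)) + lam\<^sup>2 * (Y z - my)\<^sup>2 \<partial>P)"
    unfolding Varz_def E1 unfolding Ez_def by (intro Bochner_Integration.integral_cong refl) (simp add: power2_eq_square algebra_simps)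
  also have "\<dots> = vx - 2 * lam * C + lam\<^sup>2 * vy"
  proof -
    have a: "vx = (\<integral>z. (X z - mx)\<^sup>2 \<partial>P)" unfolding vx_def Varz_def mx_def Ez_def ..
    have b: "vy = (\<integral>z. (Y z - my)\<^sup>2 \<partial>P)" unfolding vy_def Varz_def my_def Ez_def ..
    have c: "C = (\<integral>z. (X z - mx) * (Y z - my) \<partial>P)" unfolding C_def Covz_def mx_def my_def Ez_def ..
    have "(\<integral>z. (X z - mx)\<^sup>2 - 2 * lam * ((X z - mx) * (Y z - my)) + lam\<^sup>2 * (Y z - my)\<^sup>2 \<partial>P)
        = (\<integral>z. (X z - mx)\<^sup>2 - 2 * lam * ((X z - mx) * (Y z - my)) \<partial>P) + (\<integral>z. lam\<^sup>2 * (Y z - my)\<^sup>2 \<partial>P)"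
      by (rule Bochner_Integration.integral_add) (use iXX iXY iYY in auto)
    also have "(\<integral>z. (X z - mx)\<^sup>2 - 2 * lam * ((X z - mx) * (Y z - my)) \<partial>P)
        = (\<integral>z. (X z - mx)\<^sup>2 \<partial>P) - (\<integral>z. 2 * lam * ((X z - mx) * (Y z - my)) \<partial>P)"
      by (rule Bochner_Integration.integral_diff) (use iXX iXY in auto)
    also have "(\<integral>z. 2 * lam * ((X z - mx) * (Y z - my)) \<partial>P) = 2 * lam * C"
      unfolding c by (rule integral_mult_right_zero)
    also have "(\<integral>z. lam\<^sup>2 * (Y z - my)\<^sup>2 \<partial>P) = lam\<^sup>2 * vy"
      unfolding b by (rule integral_mult_right_zero)
    finally show ?thesis unfolding a .
  qed
  also have "\<dots> = vx - C\<^sup>2 / vy"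
    using VY by (simp add: lam_def vy_def power2_eq_square field_simps)
  also have "\<dots> = (1 - (Corrz P X Y)\<^sup>2) * vx"
  proof -
    have "(Corrz P X Y)\<^sup>2 = C\<^sup>2 / (vx * vy)"
      unfolding Corrz_def C_def vx_def vy_def using VX VY
      by (simp add: power_divide power_mult_distrib)
    then show ?thesis using VX VY by (simp add: vx_def vy_def field_simps)
  qed
  finally show ?thesis by (simp add: lam_def C_def vy_def vx_def)
qed



lemma Qd_facts:
  fixes f :: "'z \<Rightarrow> real \<Rightarrow> real"
  assumes V: "V \<in> sets borel" and fm: "f z \<in> borel_measurable borel"
    and fn: "\<And>v. v \<in> V \<Longrightarrow> 0 \<le> f z v"
    and fd: "set_integrable lborel V (f z) \<and> (\<integral>v\<in>V. f z v \<partial>lborel) = 1"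
  shows "prob_space (density lborel (\<lambda>v. ennreal (indicator V v * f z v)))"
    and "\<And>\<phi>. \<phi> \<in> borel_measurable borel \<Longrightarrow>
          (\<integral>v. \<phi> v \<partial>density lborel (\<lambda>v. ennreal (indicator V v * f z v))) = (\<integral>v\<in>V. f z v * \<phi> v \<partial>lborel)"
proof -
  have gm: "(\<lambda>v. indicator V v * f z v) \<in> borel_measurable lborel"
    using V fm by (simp add: measurable_lborel1)
  have gn: "0 \<le> indicator V v * f z v" for v using fn by (auto simp: indicator_def)
  have int: "integrable lborel (\<lambda>v. indicator V v * f z v)"
    using fd by (simp add: set_integrable_def)
  have "emeasure (density lborel (\<lambda>v. ennreal (indicator V v * f z v))) UNIV
      = (\<integral>\<^sup>+v. ennreal (indicator V v * f z v) \<partial>lborel)"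
    using gm by (simp add: emeasure_density)
  also have "\<dots> = ennreal (\<integral>v. indicator V v * f z v \<partial>lborel)"
    by (rule nn_integral_eq_integral[OF int]) (use gn in auto)
  also have "(\<integral>v. indicator V v * f z v \<partial>lborel) = 1"
    using fd by (simp add: set_lebesgue_integral_def)
  finally show "prob_space (density lborel (\<lambda>v. ennreal (indicator V v * f z v)))"
    by (intro prob_spaceI) simp
  fix \<phi> :: "real \<Rightarrow> real" assume \<phi>: "\<phi> \<in> borel_measurable borel"
  have "(\<integral>v. \<phi> v \<partial>density lborel (\<lambda>v. ennreal (indicator V v * f z v))) = (\<integral>v. (indicator V v * f z v) *\<^sub>R \<phi> v \<partial>lborel)"
    by (rule integral_density) (use gm gn \<phi> in \<open>auto simp: measurable_lborel1\<close>)
  also have "\<dots> = (\<integral>v\<in>V. f z v * \<phi> v \<partial>lborel)"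
    by (simp add: set_lebesgue_integral_def mult.assoc)
  finally show "(\<integral>v. \<phi> v \<partial>density lborel (\<lambda>v. ennreal (indicator V v * f z v))) = (\<integral>v\<in>V. f z v * \<phi> v \<partial>lborel)" .
qed

lemma decomp:
  fixes M N :: nat
  assumes M: "1 \<le> M" and N: "1 \<le> N"
  shows "c0 - cv_estimator P V S f ft M N w zs ws =
    (c0 - Ez P (smooth V S f w))
    + (\<Sum>k<M. ((Ez P (smooth V S f w) - lambda_opt P V S f ft w * Ez P (smooth V S ft w))
                - (smooth V S f w (zs k) - lambda_opt P V S f ft w * smooth V S ft w (zs k))) / real M)
    + (\<Sum>ki\<in>{..<M} \<times> {..<N}. (smooth V S f w (zs (fst ki)) - S (w - ws ki)) / (real M * real N))"
proof -
  define sf where "sf = smooth V S f w"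
  define st where "st = smooth V S ft w"
  define lam where "lam = lambda_opt P V S f ft w"
  have Mp: "0 < real M" and Np: "0 < real N" using M N by auto
  have s1: "(\<Sum>ki\<in>{..<M} \<times> {..<N}. (sf (zs (fst ki)) - S (w - ws ki)) / (real M * real N))
      = (\<Sum>k<M. sf (zs k)) / real M - (\<Sum>k<M. kde S N ws k w) / real M"
  proof -
    have "(\<Sum>ki\<in>{..<M} \<times> {..<N}. (sf (zs (fst ki)) - S (w - ws ki)) / (real M * real N))
        = (\<Sum>k<M. \<Sum>i<N. (sf (zs k) - S (w - ws (k, i))) / (real M * real N))"
      by (simp add: sum.cartesian_product split_beta)
    also have "\<dots> = (\<Sum>k<M. sf (zs k) / real M - kde S N ws k w / real M)"
    proof (intro sum.cong refl)
      fix k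
      have "(\<Sum>i<N. (sf (zs k) - S (w - ws (k, i))) / (real M * real N))
          = (real N * sf (zs k) - (\<Sum>i<N. S (w - ws (k, i)))) / (real M * real N)"
        by (simp add: sum_divide_distrib[symmetric] sum_subtractf)
      also have "\<dots> = sf (zs k) / real M - kde S N ws k w / real M"
        using Mp Np by (simp add: kde_def field_simps)
      finally show "(\<Sum>i<N. (sf (zs k) - S (w - ws (k, i))) / (real M * real N)) = sf (zs k) / real M - kde S N ws k w / real M" .
    qed
    also have "\<dots> = (\<Sum>k<M. sf (zs k)) / real M - (\<Sum>k<M. kde S N ws k w) / real M"
      by (simp add: sum_subtractf sum_divide_distrib)
    finally show ?thesis .
  qed
  have s2: "(\<Sum>k<M. ((Ez P sf - lam * Ez P st) - (sf (zs k) - lam * st (zs k))) / real M)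
      = (Ez P sf - lam * Ez P st) - (\<Sum>k<M. sf (zs k)) / real M + lam * ((\<Sum>k<M. st (zs k)) / real M)"
  proof -
    have "(\<Sum>k<M. ((Ez P sf - lam * Ez P st) - (sf (zs k) - lam * st (zs k))))
        = real M * (Ez P sf - lam * Ez P st) - (\<Sum>k<M. sf (zs k)) + lam * (\<Sum>k<M. st (zs k))"
      by (simp add: sum_subtractf sum.distrib sum_distrib_left)
    then have "(\<Sum>k<M. ((Ez P sf - lam * Ez P st) - (sf (zs k) - lam * st (zs k)))) / real M
        = (real M * (Ez P sf - lam * Ez P st) - (\<Sum>k<M. sf (zs k)) + lam * (\<Sum>k<M. st (zs k))) / real M" by simp
    then show ?thesis using Mp
      by (simp only: sum_divide_distrib[symmetric]) (simp add: field_simps)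
  qed
  show ?thesis
    unfolding sf_def[symmetric] st_def[symmetric] lam_def[symmetric] s1 s2
    by (simp add: cv_estimator_def sf_def st_def lam_def algebra_simps)
qed

lemma EEV_formula:
  fixes P :: "'z measure" and f ft :: "'z \<Rightarrow> real \<Rightarrow> real" and M N :: nat
  assumes P: "prob_space P"
    and V: "V \<in> sets borel"
    and fm: "\<And>z. f z \<in> borel_measurable borel"
    and fn: "\<And>z v. v \<in> V \<Longrightarrow> 0 \<le> f z v"
    and fd: "\<And>z. set_integrable lborel V (f z) \<and> (\<integral>v\<in>V. f z v \<partial>lborel) = 1"
    and Sm: "S \<in> borel_measurable borel" and Sn: "\<And>x. 0 \<le> S x" and SB: "\<And>x. S x \<le> B"
    and sfm: "smooth V S f w \<in> borel_measurable P"
    and stm: "smooth V S ft w \<in> borel_measurable P"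
    and sgm: "sigmaS2 V S f w \<in> borel_measurable P"
    and sfB: "\<And>z. \<bar>smooth V S f w z\<bar> \<le> B"
    and stB: "\<And>z. \<bar>smooth V S ft w z\<bar> \<le> B"
    and sgB: "\<And>z. \<bar>sigmaS2 V S f w z\<bar> \<le> B"
    and M: "1 \<le> M" and N: "1 \<le> N"
  shows "EEV P V f M N (\<lambda>zs ws. (c0 - cv_estimator P V S f ft M N w zs ws)\<^sup>2)
    = ennreal ((c0 - Ez P (smooth V S f w))\<^sup>2
        + Varz P (\<lambda>z. smooth V S f w z - lambda_opt P V S f ft w * smooth V S ft w z) / real M
        + Ez P (sigmaS2 V S f w) / (real M * real N))"
proof -
  interpret P: prob_space P by (fact P)
  define sf where "sf = smooth V S f w"
  define st where "st = smooth V S ft w"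
  define sg where "sg = sigmaS2 V S f w"
  define lam where "lam = lambda_opt P V S f ft w"
  define U where "U = (\<lambda>z. sf z - lam * st z)"
  define EU where "EU = Ez P sf - lam * Ez P st"
  define A0 where "A0 = c0 - Ez P sf"
  define gg where "gg z = (EU - U z) / real M" for z
  define h where "h z v = (sf z - S (w - v)) / (real M * real N)" for z v
  define I where "I = {..<M} \<times> {..<N}"
  define Qd where "Qd z = density lborel (\<lambda>v. ennreal (indicator V v * f z v))" for z
  have Mp: "0 < real M" and Np: "0 < real N" using M N by auto
  have finI: "finite I" by (simp add: I_def)
  have Qprob: "prob_space (Qd z)" for z
    unfolding Qd_def by (rule Qd_facts(1)[OF V fm fn fd])
  have Qint: "(\<integral>v. \<phi> v \<partial>Qd z) = (\<integral>v\<in>V. f z v * \<phi> v \<partial>lborel)" if "\<phi> \<in> borel_measurable borel" for \<phi> z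
    unfolding Qd_def by (rule Qd_facts(2)[OF V fm fn fd that])
  have decomp': "c0 - cv_estimator P V S f ft M N w zs ws = A0 + (\<Sum>k<M. gg (zs k)) + (\<Sum>ki\<in>I. h (zs (fst ki)) (ws ki))" for zs ws
    unfolding decomp[OF M N] A0_def gg_def EU_def U_def h_def I_def sf_def st_def lam_def by simp
  have inner: "(\<integral>\<^sup>+ ws. ennreal ((c0 - cv_estimator P V S f ft M N w zs ws)\<^sup>2) *
          (\<Prod>ki\<in>{..<M} \<times> {..<N}. ennreal (indicator V (ws ki) * f (zs (fst ki)) (ws ki)))
        \<partial>(PiM ({..<M} \<times> {..<N}) (\<lambda>_. lborel)))
     = ennreal ((A0 + (\<Sum>k<M. gg (zs k)))\<^sup>2 + (\<Sum>k<M. real N * (sg (zs k) / (real M * real N)\<^sup>2)))" for zs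
  proof -
    define c where "c = A0 + (\<Sum>k<M. gg (zs k))"
    define Qs where "Qs ki = Qd (zs (fst ki))" for ki :: "nat \<times> nat"
    have hm: "h z \<in> borel_measurable borel" for z unfolding h_def using Sm by measurable
    have hmlb: "h z \<in> borel_measurable lborel" for z using hm by (simp add: measurable_lborel1)
    have hmQ: "h z \<in> borel_measurable (Qd z')" for z z'
      using hm by (simp add: Qd_def measurable_cong_sets[OF sets_density[of lborel] refl])
    have hB: "\<bar>h z v\<bar> \<le> 2 * B" for z v
    proof -
      have "\<bar>sf z - S (w - v)\<bar> \<le> 2 * B" using sfB[of z] Sn[of "w - v"] SB[of "w - v"] by (simp add: sf_def)
      moreover have "(1::real) * 1 \<le> real M * real N" by (rule mult_mono) (use M N in auto)
      ultimately have "\<bar>sf z - S (w - v)\<bar> / (real M * real N) \<le> 2 * B / 1"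
        by (intro frac_le) auto
      then show ?thesis unfolding h_def using Mp Np by (simp add: abs_divide abs_mult)
    qed
    have Sint: "integrable (Qd z) (\<lambda>v. S (w - v))" for z
      by (rule finite_measure.integrable_const_bound[OF prob_space.axioms(1)[OF Qprob], where B=B])
         (use Sn SB Sm in \<open>auto simp: Qd_def measurable_cong_sets[OF sets_density[of lborel] refl]\<close>)
    have ES: "(\<integral>v. S (w - v) \<partial>Qd z) = sf z" for z
      using Qint[of "\<lambda>v. S (w - v)" z] Sm by (simp add: sf_def smooth_def mult.commute)
    have h0: "(\<integral>v. h z v \<partial>Qd z) = 0" for z
    proof -
      have "(\<integral>v. h z v \<partial>Qd z) = (\<integral>v. (sf z - S (w - v)) \<partial>Qd z) / (real M * real N)"
        unfolding h_def by simp
      also have "(\<integral>v. (sf z - S (w - v)) \<partial>Qd z) = sf z - sf z"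
      proof -
        interpret Qz: prob_space "Qd z" by (rule Qprob)
        have "(\<integral>v. (sf z - S (w - v)) \<partial>Qd z) = (\<integral>v. sf z \<partial>Qd z) - (\<integral>v. S (w - v) \<partial>Qd z)"
          by (rule Bochner_Integration.integral_diff) (auto intro: Sint)
        then show ?thesis using ES[of z] by (simp add: Qz.prob_space)
      qed
      finally show ?thesis by simp
    qed
    have h2: "(\<integral>v. (h z v)\<^sup>2 \<partial>Qd z) = sg z / (real M * real N)\<^sup>2" for z
    proof -
      have "(\<integral>v. (h z v)\<^sup>2 \<partial>Qd z) = (\<integral>v. (sf z - S (w - v))\<^sup>2 \<partial>Qd z) / (real M * real N)\<^sup>2"
        unfolding h_def by (simp add: power_divide)
      also have "(\<integral>v. (sf z - S (w - v))\<^sup>2 \<partial>Qd z) = sg z"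
        using Qint[of "\<lambda>v. (sf z - S (w - v))\<^sup>2" z] Sm
        by (simp add: sg_def sf_def sigmaS2_def mult.commute power2_commute)
      finally show ?thesis .
    qed
    have dens: "(\<integral>\<^sup>+ ws. ennreal ((c + (\<Sum>ki\<in>I. h (zs (fst ki)) (ws ki)))\<^sup>2) *
          (\<Prod>ki\<in>I. ennreal (indicator V (ws ki) * f (zs (fst ki)) (ws ki))) \<partial>PiM I (\<lambda>_. lborel))
        = (\<integral>\<^sup>+ ws. ennreal ((c + (\<Sum>ki\<in>I. h (zs (fst ki)) (ws ki)))\<^sup>2) \<partial>PiM I Qs)"
      unfolding Qs_def Qd_def
    proof (rule nn_integral_PiM_density[OF finI])
      show "sigma_finite_measure (density lborel (\<lambda>v. ennreal (indicator V v * f (zs (fst i)) v)))" for i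
        using Qprob[of "zs (fst i)"] unfolding Qd_def by (simp add: prob_space_imp_sigma_finite)
      show "(\<lambda>v. ennreal (indicator V v * f (zs (fst i)) v)) \<in> borel_measurable lborel" for i
        using fm V by (simp add: measurable_lborel1)
      note hmlb[measurable]
      show "(\<lambda>ws. ennreal ((c + (\<Sum>ki\<in>I. h (zs (fst ki)) (ws ki)))\<^sup>2)) \<in> borel_measurable (PiM I (\<lambda>_. lborel))"
        by measurable
    qed (auto intro: lborel.sigma_finite_measure_axioms)
    interpret PQ: product_prob_space Qs I
      by (simp add: product_prob_space_def product_prob_space_axioms_def Qprob Qs_def
          product_sigma_finite_def prob_space_imp_sigma_finite)
    have intG: "integrable (PiM I Qs) (\<lambda>ws. (c + (\<Sum>ki\<in>I. h (zs (fst ki)) (ws ki)))\<^sup>2)"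
    proof (rule PQ.P.integrable_const_bound[where B="(\<bar>c\<bar> + real (card I) * (2 * B))\<^sup>2"])
      have "\<bar>c + (\<Sum>ki\<in>I. h (zs (fst ki)) (ws ki))\<bar> \<le> \<bar>c\<bar> + real (card I) * (2 * B)" for ws
      proof -
        have "\<bar>\<Sum>ki\<in>I. h (zs (fst ki)) (ws ki)\<bar> \<le> (\<Sum>ki\<in>I. 2 * B)"
          by (rule order_trans[OF sum_abs]) (intro sum_mono hB)
        then show ?thesis by simp
      qed
      then show "AE ws in PiM I Qs. norm ((c + (\<Sum>ki\<in>I. h (zs (fst ki)) (ws ki)))\<^sup>2) \<le> (\<bar>c\<bar> + real (card I) * (2 * B))\<^sup>2"
        by (intro AE_I2) (auto intro!: sq_le_of_abs_le)
      note hmQ[measurable]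
      show "(\<lambda>ws. (c + (\<Sum>ki\<in>I. h (zs (fst ki)) (ws ki)))\<^sup>2) \<in> borel_measurable (PiM I Qs)"
        unfolding Qs_def by measurable
    qed
    have "(\<integral>\<^sup>+ ws. ennreal ((c0 - cv_estimator P V S f ft M N w zs ws)\<^sup>2) *
          (\<Prod>ki\<in>{..<M} \<times> {..<N}. ennreal (indicator V (ws ki) * f (zs (fst ki)) (ws ki)))
        \<partial>(PiM ({..<M} \<times> {..<N}) (\<lambda>_. lborel)))
      = (\<integral>\<^sup>+ ws. ennreal ((c + (\<Sum>ki\<in>I. h (zs (fst ki)) (ws ki)))\<^sup>2) *
          (\<Prod>ki\<in>I. ennreal (indicator V (ws ki) * f (zs (fst ki)) (ws ki))) \<partial>PiM I (\<lambda>_. lborel))"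
      unfolding decomp' c_def I_def by (simp add: add.assoc)
    also have "\<dots> = (\<integral>\<^sup>+ ws. ennreal ((c + (\<Sum>ki\<in>I. h (zs (fst ki)) (ws ki)))\<^sup>2) \<partial>PiM I Qs)"
      by (rule dens)
    also have "\<dots> = ennreal (\<integral> ws. (c + (\<Sum>ki\<in>I. h (zs (fst ki)) (ws ki)))\<^sup>2 \<partial>PiM I Qs)"
      by (rule nn_integral_eq_integral[OF intG]) simp
    also have "(\<integral> ws. (c + (\<Sum>ki\<in>I. h (zs (fst ki)) (ws ki)))\<^sup>2 \<partial>PiM I Qs)
        = c\<^sup>2 + (\<Sum>ki\<in>I. \<integral>y. (h (zs (fst ki)) y)\<^sup>2 \<partial>Qs ki)"
    proof (rule PiM_var_sum[where B="2*B"])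
      show "prob_space (Qs i)" for i unfolding Qs_def by (rule Qprob)
      show "h (zs (fst i)) \<in> borel_measurable (Qs i)" for i unfolding Qs_def by (rule hmQ)
      show "\<bar>h (zs (fst i)) y\<bar> \<le> 2 * B" for i y by (rule hB)
      show "(\<integral>y. h (zs (fst i)) y \<partial>Qs i) = 0" for i unfolding Qs_def by (rule h0)
    qed (rule finI)
    also have "(\<Sum>ki\<in>I. \<integral>y. (h (zs (fst ki)) y)\<^sup>2 \<partial>Qs ki) = (\<Sum>ki\<in>I. sg (zs (fst ki)) / (real M * real N)\<^sup>2)"
      unfolding Qs_def by (intro sum.cong refl h2)
    also have "\<dots> = (\<Sum>k<M. real N * (sg (zs k) / (real M * real N)\<^sup>2))"
    proof -
      have "(\<Sum>ki\<in>I. sg (zs (fst ki)) / (real M * real N)\<^sup>2) = (\<Sum>k<M. \<Sum>i<N. sg (zs k) / (real M * real N)\<^sup>2)"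
      proof -
        have "(\<Sum>ki\<in>I. sg (zs (fst ki)) / (real M * real N)\<^sup>2) = (\<Sum>(k,i)\<in>{..<M} \<times> {..<N}. sg (zs k) / (real M * real N)\<^sup>2)"
          unfolding I_def by (intro sum.cong) auto
        also have "\<dots> = (\<Sum>k<M. \<Sum>i<N. sg (zs k) / (real M * real N)\<^sup>2)"
          by (rule sum.cartesian_product[symmetric])
        finally show ?thesis .
      qed
      then show ?thesis by simp
    qed
    finally show ?thesis unfolding c_def .
  qed
  have outer: "(\<integral>\<^sup>+ zs. ennreal ((A0 + (\<Sum>k<M. gg (zs k)))\<^sup>2 + (\<Sum>k<M. real N * (sg (zs k) / (real M * real N)\<^sup>2))) \<partial>(PiM {..<M} (\<lambda>_. P)))
     = ennreal (A0\<^sup>2 + Varz P U / real M + Ez P sg / (real M * real N))"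
  proof -
    define C where "C = real N / (real M * real N)\<^sup>2"
    define Bg where "Bg = \<bar>EU\<bar> + B + \<bar>lam\<bar> * B"
    have C0: "0 \<le> C" by (simp add: C_def)
    have ggm: "gg \<in> borel_measurable P" unfolding gg_def U_def sf_def st_def using sfm stm by measurable
    have sgm': "sg \<in> borel_measurable P" unfolding sg_def by (rule sgm)
    have Um: "U \<in> borel_measurable P" unfolding U_def sf_def st_def using sfm stm by measurable
    have UB: "\<bar>U z\<bar> \<le> B + \<bar>lam\<bar> * B" for z
    proof -
      have "\<bar>lam * st z\<bar> \<le> \<bar>lam\<bar> * B" using stB[of z] by (simp add: abs_mult st_def mult_left_mono)
      then show ?thesis using sfB[of z] unfolding U_def sf_def by linarith
    qed
    have ggB: "\<bar>gg z\<bar> \<le> Bg" for z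
    proof -
      have "\<bar>EU - U z\<bar> \<le> Bg" using UB[of z] unfolding Bg_def by linarith
      moreover have "\<bar>gg z\<bar> \<le> \<bar>EU - U z\<bar>"
      proof -
        have "\<bar>EU - U z\<bar> / real M \<le> \<bar>EU - U z\<bar> / 1"
          by (rule divide_left_mono) (use M in auto)
        then show ?thesis unfolding gg_def by (simp add: abs_divide)
      qed
      ultimately show ?thesis by linarith
    qed
    have sgn: "0 \<le> sg z" for z
      unfolding sg_def sigmaS2_def
      by (rule set_integral_nonneg') (use V fn in auto)
    have intU: "integrable P U"
      by (rule P.integrable_const_bound[where B="B + \<bar>lam\<bar> * B"]) (use UB Um in auto)
    have intsf: "integrable P sf" by (rule P.integrable_const_bound[where B=B]) (use sfB sfm in \<open>auto simp: sf_def\<close>)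
    have intst: "integrable P st" by (rule P.integrable_const_bound[where B=B]) (use stB stm in \<open>auto simp: st_def\<close>)
    have intsg: "integrable P sg" by (rule P.integrable_const_bound[where B=B]) (use sgB sgm' in \<open>auto simp: sg_def\<close>)
    have EUeq: "Ez P U = EU"
      unfolding Ez_def U_def EU_def using intsf intst by (simp add: Ez_def)
    have intU2: "integrable P (\<lambda>z. (EU - U z)\<^sup>2)"
    proof (rule P.integrable_const_bound[where B="Bg\<^sup>2"])
      have "\<bar>EU - U z\<bar> \<le> Bg" for z using UB[of z] unfolding Bg_def by linarith
      then show "AE z in P. norm ((EU - U z)\<^sup>2) \<le> Bg\<^sup>2" by (intro AE_I2) (auto intro!: sq_le_of_abs_le)
      show "(\<lambda>z. (EU - U z)\<^sup>2) \<in> borel_measurable P" using Um by measurable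
    qed
    have gg0: "(\<integral>z. gg z \<partial>P) = 0"
      unfolding gg_def using intU EUeq by (simp add: Ez_def P.prob_space)
    have gg2: "(\<integral>z. (gg z)\<^sup>2 \<partial>P) = Varz P U / (real M)\<^sup>2"
    proof -
      have "(\<integral>z. (gg z)\<^sup>2 \<partial>P) = (\<integral>z. (EU - U z)\<^sup>2 \<partial>P) / (real M)\<^sup>2"
        unfolding gg_def by (simp add: power_divide)
      also have "(\<integral>z. (EU - U z)\<^sup>2 \<partial>P) = Varz P U"
        unfolding Varz_def EUeq by (simp add: Ez_def power2_commute)
      finally show ?thesis .
    qed
    interpret PM: product_prob_space "\<lambda>_. P" "{..<M}"
      by (simp add: product_prob_space_def product_prob_space_axioms_def P
          product_sigma_finite_def prob_space_imp_sigma_finite)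
    have intsgk: "integrable (PiM {..<M} (\<lambda>_. P)) (\<lambda>zs. sg (zs k))" if "k < M" for k
      by (rule PM.P.integrable_const_bound[where B=B]) (use sgB sgm' that in \<open>auto simp: sg_def\<close>)
    have intA: "integrable (PiM {..<M} (\<lambda>_. P)) (\<lambda>zs. (A0 + (\<Sum>k<M. gg (zs k)))\<^sup>2)"
    proof (rule PM.P.integrable_const_bound[where B="(\<bar>A0\<bar> + real M * Bg)\<^sup>2"])
      have "\<bar>A0 + (\<Sum>k<M. gg (zs k))\<bar> \<le> \<bar>A0\<bar> + real M * Bg" for zs
      proof -
        have "\<bar>\<Sum>k<M. gg (zs k)\<bar> \<le> (\<Sum>k<M. Bg)"
          by (rule order_trans[OF sum_abs]) (intro sum_mono ggB)
        then show ?thesis by simp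
      qed
      then show "AE zs in PiM {..<M} (\<lambda>_. P). norm ((A0 + (\<Sum>k<M. gg (zs k)))\<^sup>2) \<le> (\<bar>A0\<bar> + real M * Bg)\<^sup>2"
        by (intro AE_I2) (auto intro!: sq_le_of_abs_le)
      show "(\<lambda>zs. (A0 + (\<Sum>k<M. gg (zs k)))\<^sup>2) \<in> borel_measurable (PiM {..<M} (\<lambda>_. P))"
        using ggm by measurable
    qed
    have intF: "integrable (PiM {..<M} (\<lambda>_. P)) (\<lambda>zs. (A0 + (\<Sum>k<M. gg (zs k)))\<^sup>2 + (\<Sum>k<M. real N * (sg (zs k) / (real M * real N)\<^sup>2)))"
      using intA intsgk by (intro Bochner_Integration.integrable_add Bochner_Integration.integrable_sum integrable_mult_right integrable_divide) auto
    have "(\<integral>\<^sup>+ zs. ennreal ((A0 + (\<Sum>k<M. gg (zs k)))\<^sup>2 + (\<Sum>k<M. real N * (sg (zs k) / (real M * real N)\<^sup>2))) \<partial>(PiM {..<M} (\<lambda>_. P)))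
        = ennreal (\<integral> zs. (A0 + (\<Sum>k<M. gg (zs k)))\<^sup>2 + (\<Sum>k<M. real N * (sg (zs k) / (real M * real N)\<^sup>2)) \<partial>(PiM {..<M} (\<lambda>_. P)))"
      by (rule nn_integral_eq_integral[OF intF]) (use sgn in \<open>auto intro!: AE_I2 sum_nonneg add_nonneg_nonneg divide_nonneg_nonneg mult_nonneg_nonneg\<close>)
    also have "(\<integral> zs. (A0 + (\<Sum>k<M. gg (zs k)))\<^sup>2 + (\<Sum>k<M. real N * (sg (zs k) / (real M * real N)\<^sup>2)) \<partial>(PiM {..<M} (\<lambda>_. P)))
        = (\<integral> zs. (A0 + (\<Sum>k<M. gg (zs k)))\<^sup>2 \<partial>(PiM {..<M} (\<lambda>_. P)))
          + (\<Sum>k<M. real N * ((\<integral> zs. sg (zs k) \<partial>(PiM {..<M} (\<lambda>_. P))) / (real M * real N)\<^sup>2))"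
    proof -
      define G where "G k zs = real N * (sg (zs k) / (real M * real N)\<^sup>2)" for k and zs :: "nat \<Rightarrow> 'z"
      have iG: "integrable (PiM {..<M} (\<lambda>_. P)) (G k)" if "k \<in> {..<M}" for k
        unfolding G_def using intsgk that by (intro integrable_mult_right integrable_divide) auto
      have eG: "(\<integral>zs. G k zs \<partial>(PiM {..<M} (\<lambda>_. P))) = real N * ((\<integral> zs. sg (zs k) \<partial>(PiM {..<M} (\<lambda>_. P))) / (real M * real N)\<^sup>2)" for k
        unfolding G_def by simp
      have "(\<integral> zs. (A0 + (\<Sum>k<M. gg (zs k)))\<^sup>2 + (\<Sum>k<M. G k zs) \<partial>(PiM {..<M} (\<lambda>_. P)))
          = (\<integral> zs. (A0 + (\<Sum>k<M. gg (zs k)))\<^sup>2 \<partial>(PiM {..<M} (\<lambda>_. P))) + (\<integral> zs. (\<Sum>k<M. G k zs) \<partial>(PiM {..<M} (\<lambda>_. P)))"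
        by (rule Bochner_Integration.integral_add[OF intA Bochner_Integration.integrable_sum]) (use iG in auto)
      also have "(\<integral> zs. (\<Sum>k<M. G k zs) \<partial>(PiM {..<M} (\<lambda>_. P))) = (\<Sum>k<M. \<integral>zs. G k zs \<partial>(PiM {..<M} (\<lambda>_. P)))"
        by (rule Bochner_Integration.integral_sum) (use iG in auto)
      finally show ?thesis unfolding G_def eG[unfolded G_def] .
    qed
    also have "(\<integral> zs. (A0 + (\<Sum>k<M. gg (zs k)))\<^sup>2 \<partial>(PiM {..<M} (\<lambda>_. P))) = A0\<^sup>2 + (\<Sum>k<M. \<integral>z. (gg z)\<^sup>2 \<partial>P)"
      by (rule PiM_var_sum[where B=Bg]) (use P ggm ggB gg0 in auto)
    also have "(\<Sum>k<M. real N * ((\<integral> zs. sg (zs k) \<partial>(PiM {..<M} (\<lambda>_. P))) / (real M * real N)\<^sup>2))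
        = (\<Sum>k<M. real N * (Ez P sg / (real M * real N)\<^sup>2))"
      by (intro sum.cong refl) (simp add: Ez_def PiM_integral_one[where Q="\<lambda>_. P", OF P _ _ intsg])
    also have "A0\<^sup>2 + (\<Sum>k<M. \<integral>z. (gg z)\<^sup>2 \<partial>P) + (\<Sum>k<M. real N * (Ez P sg / (real M * real N)\<^sup>2))
        = A0\<^sup>2 + Varz P U / real M + Ez P sg / (real M * real N)"
    proof -
      have "(\<Sum>k<M. \<integral>z. (gg z)\<^sup>2 \<partial>P) = real M * (Varz P U / (real M)\<^sup>2)" by (simp add: gg2)
      also have "\<dots> = Varz P U / real M" using Mp by (simp add: power2_eq_square)
      finally have 1: "(\<Sum>k<M. \<integral>z. (gg z)\<^sup>2 \<partial>P) = Varz P U / real M" .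
      have "(\<Sum>k<M. real N * (Ez P sg / (real M * real N)\<^sup>2)) = real M * (real N * (Ez P sg / (real M * real N)\<^sup>2))" by simp
      also have "\<dots> = Ez P sg / (real M * real N)" using Mp Np by (simp add: power2_eq_square field_simps)
      finally have 2: "(\<Sum>k<M. real N * (Ez P sg / (real M * real N)\<^sup>2)) = Ez P sg / (real M * real N)" .
      show ?thesis unfolding 1 2 ..
    qed
    finally show ?thesis .
  qed
  show ?thesis
    unfolding EEV_def inner outer
    by (simp add: A0_def U_def sf_def st_def sg_def lam_def)
qed



theorem theorem4:
  fixes \<Psi> :: "'z::euclidean_space \<Rightarrow> real"
    and V :: "real set"
    and f ft :: "'z \<Rightarrow> real \<Rightarrow> real"
    and S :: "real \<Rightarrow> real"
    and dw q C :: real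
    and p :: ennreal
    and M N :: nat
  defines "P \<equiv> density lborel (\<lambda>z. ennreal (\<Psi> z))"
  assumes Psi_meas: "\<Psi> \<in> borel_measurable borel"
    and Psi_nonneg: "\<And>z. 0 \<le> \<Psi> z"
    and Psi_prob: "prob_space P"
    and V_meas: "V \<in> sets lborel"
    and f_meas: "case_prod f \<in> borel_measurable (borel \<Otimes>\<^sub>M borel)"
    and ft_meas: "case_prod ft \<in> borel_measurable (borel \<Otimes>\<^sub>M borel)"
    and f_nonneg: "\<And>z v. v \<in> V \<Longrightarrow> 0 \<le> f z v"
    and ft_nonneg: "\<And>z v. v \<in> V \<Longrightarrow> 0 \<le> ft z v"
    and f_dens: "\<And>z. set_integrable lborel V (f z) \<and> (\<integral>v\<in>V. f z v \<partial>lborel) = 1"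
    and ft_dens: "\<And>z. set_integrable lborel V (ft z) \<and> (\<integral>v\<in>V. ft z v \<partial>lborel) = 1"
    and S_meas: "S \<in> borel_measurable borel"
    and S_nonneg: "\<And>x. 0 \<le> S x"
    and S_bdd: "\<exists>B. \<forall>x. S x \<le> B"
    and dw_pos: "0 < dw"
    and var_ft_pos: "\<And>w. w \<in> V \<Longrightarrow> Varz P (smooth V S ft w) > 0"
    and var_f_pos: "\<And>w. w \<in> V \<Longrightarrow> Varz P (smooth V S f w) > 0"
    and M_pos: "1 \<le> M" and N_pos: "1 \<le> N"
    and p_ge: "1 \<le> p" and q_pos: "0 < q"
    and bias: "Lp_norm_real V p (\<lambda>w. Ez P (\<lambda>z. f z w) - Ez P (smooth V S f w))
                 \<le> ennreal (C * dw powr q)"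
  shows "Lp_norm V p (\<lambda>w. enn_powr (EEV P V f M N (\<lambda>zs ws.
              (Ez P (\<lambda>z. f z w) - cv_estimator P V S f ft M N w zs ws)\<^sup>2)) (1/2))
         \<le> Lp_norm_real V p (\<lambda>w. sqrt (1 - (Corrz P (smooth V S f w) (smooth V S ft w))\<^sup>2)
                                  * sqrt (Varz P (smooth V S f w))) / ennreal (sqrt (real M))
           + Lp_norm_real V p (\<lambda>w. sqrt (Ez P (sigmaS2 V S f w))) / ennreal (sqrt (real N))
           + ennreal (C * dw powr q)"
proof -
  interpret P: prob_space P by (fact Psi_prob)
  have sP: "sets P = sets borel" by (simp add: P_def)
  have V': "V \<in> sets borel" using V_meas by simp
  obtain B0 where SB0: "\<And>x. S x \<le> B0" using S_bdd by blast
  define Bs where "Bs = max B0 0"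
  define B where "B = Bs + Bs\<^sup>2"
  have Bs0: "0 \<le> Bs" by (simp add: Bs_def)
  have SBs: "S x \<le> Bs" for x using SB0[of x] by (simp add: Bs_def)
  have BsB: "Bs \<le> B" "Bs\<^sup>2 \<le> B" using Bs0 by (auto simp: B_def)
  have SB: "S x \<le> B" for x using SBs[of x] BsB by linarith
  have fmz: "f z \<in> borel_measurable borel" for z
    using comp2_meas[OF f_meas, where g="\<lambda>_. z" and N=borel and h="\<lambda>v. v"] by simp
  have ftz: "ft z \<in> borel_measurable borel" for z
    using comp2_meas[OF ft_meas, where g="\<lambda>_. z" and N=borel and h="\<lambda>v. v"] by simp
  have bf: "0 \<le> smooth V S f w z" "smooth V S f w z \<le> Bs" "0 \<le> sigmaS2 V S f w z" "sigmaS2 V S f w z \<le> Bs\<^sup>2" for w z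
    using smooth_bounds[where f=f and z=z and V=V and S=S and B=Bs and w=w, OF V' fmz[of z] f_nonneg[where z=z] f_dens[of z] S_meas S_nonneg SBs] by auto
  have bft: "0 \<le> smooth V S ft w z" "smooth V S ft w z \<le> Bs" for w z
    using smooth_bounds[where f=ft and z=z and V=V and S=S and B=Bs and w=w, OF V' ftz[of z] ft_nonneg[where z=z] ft_dens[of z] S_meas S_nonneg SBs] by auto
  have sfB: "\<bar>smooth V S f w z\<bar> \<le> B" for w z using bf(1,2)[of w z] BsB by auto
  have stB: "\<bar>smooth V S ft w z\<bar> \<le> B" for w z using bft(1,2)[of w z] BsB by auto
  have sgB: "\<bar>sigmaS2 V S f w z\<bar> \<le> B" for w z using bf(3,4)[of w z] BsB by auto
  have sgn: "0 \<le> sigmaS2 V S f w z" for w z using bf(3) by auto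
  have idP: "(\<lambda>z. z) \<in> measurable P borel" by (rule measurable_ident_sets[OF sP])
  have sfm: "smooth V S f w \<in> borel_measurable P" for w
    using smooth_meas[OF V' S_meas f_meas, where a="\<lambda>_. w" and N=P and b="\<lambda>z. z"] idP by simp
  have stm: "smooth V S ft w \<in> borel_measurable P" for w
    using smooth_meas[OF V' S_meas ft_meas, where a="\<lambda>_. w" and N=P and b="\<lambda>z. z"] idP by simp
  have sgm: "sigmaS2 V S f w \<in> borel_measurable P" for w
    using sigma_meas[OF V' S_meas f_meas, where a="\<lambda>_. w" and N=P and b="\<lambda>z. z"] idP by simp
  define a where "a w = Ez P (\<lambda>z. f z w) - Ez P (smooth V S f w)" for w
  define VU where "VU w = Varz P (\<lambda>z. smooth V S f w z - lambda_opt P V S f ft w * smooth V S ft w z)" for w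
  define Es where "Es w = Ez P (sigmaS2 V S f w)" for w
  define T where "T w = (a w)\<^sup>2 + VU w / real M + Es w / (real M * real N)" for w
  define g1 where "g1 w = sqrt (1 - (Corrz P (smooth V S f w) (smooth V S ft w))\<^sup>2) * sqrt (Varz P (smooth V S f w))" for w
  define g2 where "g2 w = sqrt (Es w)" for w
  have VU0: "0 \<le> VU w" for w
    unfolding VU_def Varz_def Ez_def by (rule Bochner_Integration.integral_nonneg) simp
  have Es0: "0 \<le> Es w" for w
    unfolding Es_def Ez_def by (rule Bochner_Integration.integral_nonneg) (simp add: sgn)
  have T0: "0 \<le> T w" for w unfolding T_def using VU0[of w] Es0[of w] by simp
  have EEV_eq: "EEV P V f M N (\<lambda>zs ws. (Ez P (\<lambda>z. f z w) - cv_estimator P V S f ft M N w zs ws)\<^sup>2) = ennreal (T w)" for w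
    unfolding T_def a_def VU_def Es_def
    by (rule EEV_formula[OF Psi_prob V' fmz f_nonneg f_dens S_meas S_nonneg SB sfm stm sgm sfB stB sgB M_pos N_pos])
  have LHS: "(\<lambda>w. enn_powr (EEV P V f M N (\<lambda>zs ws. (Ez P (\<lambda>z. f z w) - cv_estimator P V S f ft M N w zs ws)\<^sup>2)) (1/2))
      = (\<lambda>w. ennreal (sqrt (T w)))"
    by (rule ext) (simp add: EEV_eq enn_powr_ennreal T0 powr_half_sqrt)
  note [measurable] = smooth_meas[OF V' S_meas f_meas] smooth_meas[OF V' S_meas ft_meas]
    sigma_meas[OF V' S_meas f_meas] Ez_meas[OF Psi_prob sP] comp2_meas[OF f_meas]
  have ma: "a \<in> borel_measurable borel" unfolding a_def by measurable
  have mT: "(\<lambda>w. sqrt (T w)) \<in> borel_measurable borel"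
    unfolding T_def a_def VU_def Es_def Varz_def lambda_opt_def Covz_def by measurable
  have m1: "g1 \<in> borel_measurable borel"
    unfolding g1_def Corrz_def Varz_def Covz_def by measurable
  have m2: "g2 \<in> borel_measurable borel"
    unfolding g2_def Es_def by measurable
  have Mp: "0 < real M" and Np: "0 < real N" using M_pos N_pos by auto
  have bound: "sqrt (T w) \<le> \<bar>a w\<bar> + \<bar>g1 w\<bar> / sqrt (real M) + \<bar>g2 w\<bar> / sqrt (real N)" if wV: "w \<in> V" for w
  proof -
    have VUeq: "VU w = (1 - (Corrz P (smooth V S f w) (smooth V S ft w))\<^sup>2) * Varz P (smooth V S f w)"
      unfolding VU_def lambda_opt_def
      by (rule var_identity[OF Psi_prob sfm stm sfB stB var_ft_pos[OF wV] var_f_pos[OF wV]])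
    have rho: "0 \<le> 1 - (Corrz P (smooth V S f w) (smooth V S ft w))\<^sup>2"
      using VU0[of w] var_f_pos[OF wV] unfolding VUeq by (simp add: zero_le_mult_iff)
    have g1eq: "g1 w = sqrt (VU w)" unfolding g1_def VUeq by (simp add: real_sqrt_mult)
    have "sqrt (T w) \<le> sqrt ((a w)\<^sup>2 + VU w / real M) + sqrt (Es w / (real M * real N))"
      unfolding T_def by (rule sqrt_add_le_add_sqrt) (use VU0[of w] Es0[of w] Mp Np in auto)
    also have "sqrt ((a w)\<^sup>2 + VU w / real M) \<le> sqrt ((a w)\<^sup>2) + sqrt (VU w / real M)"
      by (rule sqrt_add_le_add_sqrt) (use VU0[of w] Mp in auto)
    also have "sqrt (Es w / (real M * real N)) \<le> sqrt (Es w / real N)"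
    proof (rule real_sqrt_le_mono)
      have "(1::real) * real N \<le> real M * real N" using M_pos Np by (intro mult_right_mono) auto
      then show "Es w / (real M * real N) \<le> Es w / real N"
        using Es0[of w] Np by (intro divide_left_mono) auto
    qed
    finally show ?thesis
      using g1eq VU0[of w] Es0[of w]
      by (simp add: g2_def real_sqrt_divide)
  qed
  have main: "Lp_norm V p (\<lambda>w. ennreal (sqrt (T w)))
      \<le> Lp_norm_real V p a + Lp_norm_real V p g1 / ennreal (sqrt (real M)) + Lp_norm_real V p g2 / ennreal (sqrt (real N))"
    by (rule Lp_final[OF V_meas p_ge mT ma m1 m2]) (use Mp Np bound T0 in auto)
  have fin: "Lp_norm V p (\<lambda>w. ennreal (sqrt (T w))) \<le> ennreal (C * dw powr q) + Lp_norm_real V p g1 / ennreal (sqrt (real M)) + Lp_norm_real V p g2 / ennreal (sqrt (real N))"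
    using order_trans[OF main add_mono[OF add_mono[OF bias[folded a_def] order_refl] order_refl]] .
  have e1: "g1 = (\<lambda>w. sqrt (1 - (Corrz P (smooth V S f w) (smooth V S ft w))\<^sup>2) * sqrt (Varz P (smooth V S f w)))"
    by (rule ext) (simp add: g1_def)
  have e2: "g2 = (\<lambda>w. sqrt (Ez P (sigmaS2 V S f w)))" by (rule ext) (simp add: g2_def Es_def)
  show ?thesis
    unfolding LHS using fin unfolding e1 e2 by (simp add: ac_simps)
qed


end
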